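(* Let $G$ be a connected graph with $\mathrm{col}(G)\geq 3$. Then for every integer $m\geq \mathrm{col}(G)+3$, $$P_{DP}(K_1\vee G,m)\geq \min\left\{P(K_1\vee G,m),\; m\,P_{DP}(G,m-1)+2\,(m-\mathrm{col}(G)-2)^{|V(G)|-2}\right\}.$$
   Context: All graphs are finite and simple. $K_1\vee G$ is the join of a single vertex with $G$. The coloring number $\mathrm{col}(G)$ is the smallest integer $d$ such that there is an ordering $v_1,\dots,v_n$ of $V(G)$ in which each $v_i$ has at most $d-1$ neighbors among $v_1,\dots,v_{i-1}$. $P(G,m)$ denotes the chromatic polynomial of $G$. A cover of a graph $G$ is a pair $\mathcal{H}=(L,H)$ where $H$ is a graph and $L:V(G)\to\mathcal{P}(V(H))$ satisfies: (1) the sets $L(u)$, $u\in V(G)$, partition $V(H)$; (2) for every $u$, $H[L(u)]$ is complete; (3) if $E_H(L(u),L(v))\neq\emptyset$ then $u=v$ or $uv\in E(G)$; (4) if $uv\in E(G)$ then $E_H(L(u),L(v))$ is a matching (possibly empty). Here $E_H(S,U)$ is the set of edges of $H$ between $S$ and $U$. The cover is $m$-fold if $|L(u)|=m$ for all $u$. An $\mathcal{H}$-coloring is an independent set of $H$ of size $|V(G)|$. $P_{DP}(G,\mathcal{H})$ is the number of $\mathcal{H}$-colorings, and $P_{DP}(G,m)$ is the minimum of $P_{DP}(G,\mathcal{H})$ over all $m$-fold covers $\mathcal{H}$ of $G$. *)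

theory Defs
  imports Main "HOL-Library.FuncSet"
begin

definition simple_graph :: "'a set \<Rightarrow> ('a \<Rightarrow> 'a \<Rightarrow> bool) \<Rightarrow> bool" where
  "simple_graph V E \<longleftrightarrow> finite V \<and> (\<forall>x y. E x y \<longrightarrow> x \<in> V \<and> y \<in> V)
     \<and> (\<forall>x y. E x y \<longrightarrow> E y x) \<and> (\<forall>x. \<not> E x x)"

definition connected_graph :: "'a set \<Rightarrow> ('a \<Rightarrow> 'a \<Rightarrow> bool) \<Rightarrow> bool" where
  "connected_graph V E \<longleftrightarrow> V \<noteq> {} \<and> (\<forall>u\<in>V. \<forall>v\<in>V. E\<^sup>*\<^sup>* u v)"

text \<open>Join K_1 \<or> G: new vertex None adjacent to every Some v, v in V.\<close>
definition join_V :: "'a set \<Rightarrow> 'a option set" where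
  "join_V V = insert None (Some ` V)"

definition join_E :: "'a set \<Rightarrow> ('a \<Rightarrow> 'a \<Rightarrow> bool) \<Rightarrow> 'a option \<Rightarrow> 'a option \<Rightarrow> bool" where
  "join_E V E x y \<longleftrightarrow>
     (case (x, y) of
        (None, None) \<Rightarrow> False
      | (None, Some v) \<Rightarrow> v \<in> V
      | (Some u, None) \<Rightarrow> u \<in> V
      | (Some u, Some v) \<Rightarrow> E u v)"

definition col :: "'a set \<Rightarrow> ('a \<Rightarrow> 'a \<Rightarrow> bool) \<Rightarrow> nat" where
  "col V E = (LEAST d. \<exists>xs. distinct xs \<and> set xs = V \<and>
      (\<forall>i < length xs. card {j. j < i \<and> E (xs ! i) (xs ! j)} < d))"

definition chrom_poly :: "'a set \<Rightarrow> ('a \<Rightarrow> 'a \<Rightarrow> bool) \<Rightarrow> nat \<Rightarrow> nat" where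
  "chrom_poly V E m = card {f \<in> V \<rightarrow>\<^sub>E {..<m}. \<forall>u\<in>V. \<forall>v\<in>V. E u v \<longrightarrow> f u \<noteq> f v}"

text \<open>Cover (L, H) of G, with H = (VH, EH). The vertices of H are taken in 'a \<times> nat;
  every cover of a finite graph is isomorphic to one of this form.\<close>
definition is_cover ::
  "'a set \<Rightarrow> ('a \<Rightarrow> 'a \<Rightarrow> bool) \<Rightarrow> ('a \<Rightarrow> ('a \<times> nat) set)
    \<Rightarrow> ('a \<times> nat) set \<Rightarrow> ('a \<times> nat \<Rightarrow> 'a \<times> nat \<Rightarrow> bool) \<Rightarrow> bool" where
  "is_cover V E L VH EH \<longleftrightarrow>
     simple_graph VH EH
     \<and> (\<forall>u\<in>V. L u \<subseteq> VH) \<and> (\<Union>u\<in>V. L u) = VH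
     \<and> (\<forall>u\<in>V. \<forall>v\<in>V. u \<noteq> v \<longrightarrow> L u \<inter> L v = {})
     \<and> (\<forall>u\<in>V. \<forall>x\<in>L u. \<forall>y\<in>L u. x \<noteq> y \<longrightarrow> EH x y)
     \<and> (\<forall>u\<in>V. \<forall>v\<in>V. \<forall>x\<in>L u. \<forall>y\<in>L v. EH x y \<longrightarrow> u = v \<or> E u v)
     \<and> (\<forall>u\<in>V. \<forall>v\<in>V. E u v \<longrightarrow>
          (\<forall>x\<in>L u. \<forall>y\<in>L v. \<forall>y'\<in>L v. EH x y \<and> EH x y' \<longrightarrow> y = y'))"

definition is_m_fold_cover ::
  "'a set \<Rightarrow> ('a \<Rightarrow> 'a \<Rightarrow> bool) \<Rightarrow> nat \<Rightarrow> ('a \<Rightarrow> ('a \<times> nat) set)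
    \<Rightarrow> ('a \<times> nat) set \<Rightarrow> ('a \<times> nat \<Rightarrow> 'a \<times> nat \<Rightarrow> bool) \<Rightarrow> bool" where
  "is_m_fold_cover V E m L VH EH \<longleftrightarrow> is_cover V E L VH EH \<and> (\<forall>u\<in>V. card (L u) = m)"

definition num_cover_colorings ::
  "'a set \<Rightarrow> ('a \<times> nat) set \<Rightarrow> ('a \<times> nat \<Rightarrow> 'a \<times> nat \<Rightarrow> bool) \<Rightarrow> nat" where
  "num_cover_colorings V VH EH =
     card {I. I \<subseteq> VH \<and> (\<forall>x\<in>I. \<forall>y\<in>I. \<not> EH x y) \<and> card I = card V}"

definition DP_poly :: "'a set \<Rightarrow> ('a \<Rightarrow> 'a \<Rightarrow> bool) \<Rightarrow> nat \<Rightarrow> nat" where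
  "DP_poly V E m = Inf {num_cover_colorings V VH EH | L VH EH. is_m_fold_cover V E m L VH EH}"

end

theory Submission
  imports Defs
begin


definition TR :: "'v set \<Rightarrow> ('v \<Rightarrow> 'b set) \<Rightarrow> ('b \<Rightarrow> 'b \<Rightarrow> bool) \<Rightarrow> 'b set set" where
  "TR V A EH = {I. I \<subseteq> (\<Union>v\<in>V. A v) \<and> (\<forall>x\<in>I. \<forall>y\<in>I. \<not> EH x y) \<and> (\<forall>v\<in>V. card (I \<inter> A v) = 1)}"

lemma finite_TR: "finite V \<Longrightarrow> \<forall>v\<in>V. finite (A v) \<Longrightarrow> finite (TR V A EH)"
  unfolding TR_def by (rule finite_subset[of _ "Pow (\<Union>v\<in>V. A v)"]) auto

lemma greedy_step:
  fixes A :: "'v \<Rightarrow> 'b set"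
  assumes fin: "finite V" "\<forall>v\<in>V. finite (A v)"
  and disj: "\<forall>v\<in>V. \<forall>w\<in>V. v \<noteq> w \<longrightarrow> A v \<inter> A w = {}"
  and sym: "\<forall>x y. EH x y \<longrightarrow> EH y x" and irr: "\<forall>x. \<not> EH x x"
  and mat: "\<forall>v\<in>V. \<forall>w\<in>V. v \<noteq> w \<longrightarrow> (\<forall>x\<in>A w. \<forall>y\<in>A v. \<forall>y'\<in>A v. EH x y \<and> EH x y' \<longrightarrow> y = y')"
  and z: "z \<in> V" "\<forall>w\<in>V. r w \<le> r z"
  and cz: "c + card {w\<in>V. w \<noteq> z \<and> r w \<le> r z \<and> (\<exists>x\<in>A z. \<exists>y\<in>A w. EH x y)} \<le> card (A z)"
  shows "c * card (TR (V - {z}) A EH) \<le> card (TR V A EH)"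
proof -
  define V' where "V' = V - {z}"
  define R where "R = {w\<in>V. w \<noteq> z \<and> r w \<le> r z \<and> (\<exists>x\<in>A z. \<exists>y\<in>A w. EH x y)}"
  define good where "good I' = {x\<in>A z. \<forall>y\<in>I'. \<not> EH x y}" for I'
  have finR: "finite R" using fin unfolding R_def by auto
  have disjz: "I' \<inter> A z = {}" if "I' \<in> TR V' A EH" for I'
    using that disj z unfolding TR_def V'_def by blast
  have goodc: "c \<le> card (good I')" if I': "I' \<in> TR V' A EH" for I'
  proof -
    define bad where "bad = {x\<in>A z. \<exists>y\<in>I'. EH x y}"
    have sub: "bad \<subseteq> (\<Union>w\<in>R. \<Union>y\<in>I' \<inter> A w. {x\<in>A z. EH y x})"
    proof
      fix x assume "x \<in> bad"
      then obtain y where y: "y \<in> I'" "EH x y" "x \<in> A z" unfolding bad_def by auto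
      then obtain w where w: "w \<in> V'" "y \<in> A w" using I' unfolding TR_def by auto
      have "w \<in> R" using w y z unfolding R_def V'_def by auto
      then show "x \<in> (\<Union>w\<in>R. \<Union>y\<in>I' \<inter> A w. {x\<in>A z. EH y x})" using w y sym by blast
    qed
    have c1: "card (I' \<inter> A w) = 1" if "w \<in> R" for w
      using I' that unfolding TR_def R_def V'_def by auto
    have le1: "card {x\<in>A z. EH y x} \<le> 1" if "w \<in> R" "y \<in> A w" for w y
    proof -
      have "w \<noteq> z" "w \<in> V" using that unfolding R_def by auto
      then have "\<forall>x\<in>{x\<in>A z. EH y x}. \<forall>x'\<in>{x\<in>A z. EH y x}. x = x'"
        using mat z that by auto
      moreover have "finite {x\<in>A z. EH y x}" using fin z by auto
      ultimately show ?thesis using card_le_Suc0_iff_eq by (metis One_nat_def)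
    qed
    have "card bad \<le> card (\<Union>w\<in>R. \<Union>y\<in>I' \<inter> A w. {x\<in>A z. EH y x})"
      by (rule card_mono[OF _ sub], rule finite_subset[of _ "A z"]) (use fin z in auto)
    also have "\<dots> \<le> (\<Sum>w\<in>R. card (\<Union>y\<in>I' \<inter> A w. {x\<in>A z. EH y x}))"
      by (rule card_UN_le[OF finR])
    also have "\<dots> \<le> (\<Sum>w\<in>R. 1)"
    proof (rule sum_mono)
      fix w assume w: "w \<in> R"
      have fw: "finite (I' \<inter> A w)" by (rule card_ge_0_finite) (simp add: c1[OF w])
      have "card (\<Union>y\<in>I' \<inter> A w. {x\<in>A z. EH y x}) \<le> (\<Sum>y\<in>I' \<inter> A w. card {x\<in>A z. EH y x})"
        by (rule card_UN_le[OF fw])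
      also have "\<dots> \<le> (\<Sum>y\<in>I' \<inter> A w. 1)" by (rule sum_mono) (use le1 w in auto)
      also have "\<dots> = 1" using c1[OF w] by simp
      finally show "card (\<Union>y\<in>I' \<inter> A w. {x\<in>A z. EH y x}) \<le> 1" .
    qed
    also have "\<dots> = card R" by simp
    finally have "card bad \<le> card R" .
    moreover have "good I' = A z - bad" unfolding good_def bad_def by auto
    moreover have "bad \<subseteq> A z" unfolding bad_def by auto
    moreover have "finite (A z)" using fin z by auto
    ultimately show ?thesis using cz unfolding R_def[symmetric]
      by (simp add: card_Diff_subset finite_subset)
  qed
  have finTR': "finite (TR V' A EH)" unfolding V'_def by (intro finite_TR) (use fin in auto)
  have sub: "(\<Union>I'\<in>TR V' A EH. (\<lambda>x. insert x I') ` good I') \<subseteq> TR V A EH"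
  proof clarify
    fix I' x assume I': "I' \<in> TR V' A EH" and x: "x \<in> good I'"
    have xz: "x \<in> A z" using x unfolding good_def by auto
    have dz: "I' \<inter> A z = {}" using disjz[OF I'] .
    have "x \<notin> A w" if "w \<in> V'" for w using disj that xz z unfolding V'_def by auto
    then have nx: "x \<notin> A w" if "w \<in> V" "w \<noteq> z" for w using that unfolding V'_def by simp
    have c1: "card (insert x I' \<inter> A v) = 1" if v: "v \<in> V" for v
    proof (cases "v = z")
      case True
      then have "insert x I' \<inter> A v = {x}" using dz xz by auto
      then show ?thesis by simp
    next
      case False
      then have "insert x I' \<inter> A v = I' \<inter> A v" using nx[OF v] by auto
      then show ?thesis using I' v False unfolding TR_def V'_def by auto
    qed
    have "insert x I' \<subseteq> (\<Union>v\<in>V. A v)" using I' xz z unfolding TR_def V'_def by auto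
    moreover have "\<forall>a\<in>insert x I'. \<forall>b\<in>insert x I'. \<not> EH a b"
    proof (intro ballI)
      fix a b assume ab: "a \<in> insert x I'" "b \<in> insert x I'"
      have i1: "\<forall>a\<in>I'. \<forall>b\<in>I'. \<not> EH a b" using I' unfolding TR_def by blast
      have i2: "\<forall>y\<in>I'. \<not> EH x y" using x unfolding good_def by blast
      show "\<not> EH a b" using ab i1 i2 sym irr by (metis insert_iff)
    qed
    ultimately show "insert x I' \<in> TR V A EH" using c1 unfolding TR_def mem_Collect_eq by blast
  qed
  have "c * card (TR V' A EH) = (\<Sum>I'\<in>TR V' A EH. c)" by simp
  also have "\<dots> \<le> (\<Sum>I'\<in>TR V' A EH. card ((\<lambda>x. insert x I') ` good I'))"
  proof (rule sum_mono)
    fix I' assume I': "I' \<in> TR V' A EH"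
    have "inj_on (\<lambda>x. insert x I') (good I')"
    proof (rule inj_onI)
      fix x y assume xy: "x \<in> good I'" "y \<in> good I'" "insert x I' = insert y I'"
      then have "x \<notin> I'" "y \<notin> I'" using disjz[OF I'] unfolding good_def by auto
      then show "x = y" using xy(3) by (metis insertI1 insert_iff)
    qed
    then show "c \<le> card ((\<lambda>x. insert x I') ` good I')" using goodc[OF I'] by (simp add: card_image)
  qed
  also have "\<dots> = card (\<Union>I'\<in>TR V' A EH. (\<lambda>x. insert x I') ` good I')"
  proof (rule card_UN_disjoint[symmetric, OF finTR'])
    show "\<forall>I'\<in>TR V' A EH. finite ((\<lambda>x. insert x I') ` good I')"
      using fin z unfolding good_def by auto
    show "\<forall>I1\<in>TR V' A EH. \<forall>I2\<in>TR V' A EH. I1 \<noteq> I2 \<longrightarrow>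
      (\<lambda>x. insert x I1) ` good I1 \<inter> (\<lambda>x. insert x I2) ` good I2 = {}"
    proof (intro ballI impI)
      fix I1 I2 assume a: "I1 \<in> TR V' A EH" "I2 \<in> TR V' A EH" "I1 \<noteq> I2"
      show "(\<lambda>x. insert x I1) ` good I1 \<inter> (\<lambda>x. insert x I2) ` good I2 = {}"
      proof (rule ccontr)
        assume "\<not> ?thesis"
        then obtain x y where "x \<in> good I1" "y \<in> good I2" "insert x I1 = insert y I2" by auto
        moreover have "x \<in> A z" "y \<in> A z" using calculation unfolding good_def by auto
        ultimately have "insert x I1 - A z = insert y I2 - A z" by simp
        moreover have "insert x I1 - A z = I1" using disjz[OF a(1)] \<open>x \<in> A z\<close> by auto
        moreover have "insert y I2 - A z = I2" using disjz[OF a(2)] \<open>y \<in> A z\<close> by auto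
        ultimately have "I1 = I2" by simp
        then show False using a by simp
      qed
    qed
  qed
  also have "\<dots> \<le> card (TR V A EH)"
    by (rule card_mono[OF finite_TR[OF fin] sub])
  finally show ?thesis unfolding V'_def .
qed

lemma greedy:
  fixes A :: "'v \<Rightarrow> 'b set" and r :: "'v \<Rightarrow> nat"
  assumes fin: "finite V" "\<forall>v\<in>V. finite (A v)"
  and disj: "\<forall>v\<in>V. \<forall>w\<in>V. v \<noteq> w \<longrightarrow> A v \<inter> A w = {}"
  and sym: "\<forall>x y. EH x y \<longrightarrow> EH y x" and irr: "\<forall>x. \<not> EH x x"
  and mat: "\<forall>v\<in>V. \<forall>w\<in>V. v \<noteq> w \<longrightarrow> (\<forall>x\<in>A w. \<forall>y\<in>A v. \<forall>y'\<in>A v. EH x y \<and> EH x y' \<longrightarrow> y = y')"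
  and cond: "\<forall>v\<in>V. c v + card {w\<in>V. w \<noteq> v \<and> r w \<le> r v \<and> (\<exists>x\<in>A v. \<exists>y\<in>A w. EH x y)} \<le> card (A v)"
  shows "(\<Prod>v\<in>V. c v) \<le> card (TR V A EH)"
proof -
  have "finite U \<Longrightarrow> U \<subseteq> V \<Longrightarrow> (\<Prod>v\<in>U. c v) \<le> card (TR U A EH)" for U
  proof (induction U rule: finite_remove_induct)
    case empty
    have "TR {} A EH = {{}}" unfolding TR_def by auto
    then show ?case by simp
  next
    case (remove U)
    have "finite (r ` U)" "r ` U \<noteq> {}" using remove by auto
    then have "Max (r ` U) \<in> r ` U" by (rule Max_in)
    then obtain z where z: "z \<in> U" "r z = Max (r ` U)" by auto
    have zm: "\<forall>w\<in>U. r w \<le> r z" using z \<open>finite (r ` U)\<close> by auto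
    have IH: "(\<Prod>v\<in>U - {z}. c v) \<le> card (TR (U - {z}) A EH)"
      using remove.IH[OF z(1)] remove.prems by auto
    have "card {w\<in>U. w \<noteq> z \<and> r w \<le> r z \<and> (\<exists>x\<in>A z. \<exists>y\<in>A w. EH x y)}
       \<le> card {w\<in>V. w \<noteq> z \<and> r w \<le> r z \<and> (\<exists>x\<in>A z. \<exists>y\<in>A w. EH x y)}"
      by (rule card_mono) (use fin remove.prems in auto)
    then have cz: "c z + card {w\<in>U. w \<noteq> z \<and> r w \<le> r z \<and> (\<exists>x\<in>A z. \<exists>y\<in>A w. EH x y)} \<le> card (A z)"
      using cond z remove.prems by fastforce
    have st: "c z * card (TR (U - {z}) A EH) \<le> card (TR U A EH)"
      apply (rule greedy_step[OF _ _ _ sym irr _ z(1) zm cz])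
      using remove.prems fin disj apply (auto simp: finite_subset subset_iff)[3]
      using remove.prems mat by (meson subsetD)
    have "(\<Prod>v\<in>U. c v) = c z * (\<Prod>v\<in>U - {z}. c v)"
      using z(1) remove.hyps(1) by (simp add: prod.remove)
    also have "\<dots> \<le> c z * card (TR (U - {z}) A EH)" using IH by simp
    also have "\<dots> \<le> card (TR U A EH)" by (rule st)
    finally show ?case .
  qed
  then show ?thesis using fin by simp
qed



definition gcover ::
  "'v set \<Rightarrow> ('v \<Rightarrow> 'v \<Rightarrow> bool) \<Rightarrow> ('v \<Rightarrow> 'b set) \<Rightarrow> 'b set \<Rightarrow> ('b \<Rightarrow> 'b \<Rightarrow> bool) \<Rightarrow> bool" where
  "gcover V E L VH EH \<longleftrightarrow>
     simple_graph VH EH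
     \<and> (\<forall>u\<in>V. L u \<subseteq> VH) \<and> (\<Union>u\<in>V. L u) = VH
     \<and> (\<forall>u\<in>V. \<forall>v\<in>V. u \<noteq> v \<longrightarrow> L u \<inter> L v = {})
     \<and> (\<forall>u\<in>V. \<forall>x\<in>L u. \<forall>y\<in>L u. x \<noteq> y \<longrightarrow> EH x y)
     \<and> (\<forall>u\<in>V. \<forall>v\<in>V. \<forall>x\<in>L u. \<forall>y\<in>L v. EH x y \<longrightarrow> u = v \<or> E u v)
     \<and> (\<forall>u\<in>V. \<forall>v\<in>V. E u v \<longrightarrow>
          (\<forall>x\<in>L u. \<forall>y\<in>L v. \<forall>y'\<in>L v. EH x y \<and> EH x y' \<longrightarrow> y = y'))"

lemma is_cover_gcover: "is_cover V E L VH EH = gcover V E L VH EH"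
  unfolding is_cover_def gcover_def by simp

lemma gcoverD:
  assumes "gcover V E L VH EH"
  shows gc_sg: "simple_graph VH EH" and gc_sub: "\<forall>u\<in>V. L u \<subseteq> VH" and gc_un: "(\<Union>u\<in>V. L u) = VH"
  and gc_disj: "\<forall>u\<in>V. \<forall>v\<in>V. u \<noteq> v \<longrightarrow> L u \<inter> L v = {}"
  and gc_clq: "\<forall>u\<in>V. \<forall>x\<in>L u. \<forall>y\<in>L u. x \<noteq> y \<longrightarrow> EH x y"
  and gc_cross: "\<forall>u\<in>V. \<forall>v\<in>V. \<forall>x\<in>L u. \<forall>y\<in>L v. EH x y \<longrightarrow> u = v \<or> E u v"
  and gc_mat: "\<forall>u\<in>V. \<forall>v\<in>V. E u v \<longrightarrow>
          (\<forall>x\<in>L u. \<forall>y\<in>L v. \<forall>y'\<in>L v. EH x y \<and> EH x y' \<longrightarrow> y = y')"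
  using assms unfolding gcover_def by auto

lemma sgD:
  assumes "simple_graph V E"
  shows sg_fin: "finite V" and sg_in: "\<And>x y. E x y \<Longrightarrow> x \<in> V \<and> y \<in> V"
    and sg_sym: "\<And>x y. E x y \<Longrightarrow> E y x" and sg_irr: "\<And>x. \<not> E x x"
  using assms unfolding simple_graph_def by auto

lemma sum_le1_eq_card:
  fixes f :: "'v \<Rightarrow> nat"
  assumes "finite V" "\<forall>v\<in>V. f v \<le> 1"
  shows "sum f V = card V \<longleftrightarrow> (\<forall>v\<in>V. f v = 1)"
proof
  assume s: "sum f V = card V"
  show "\<forall>v\<in>V. f v = 1"
  proof (rule ccontr)
    assume "\<not> ?thesis"
    then obtain v where v: "v \<in> V" "f v = 0" using assms(2) by force
    have "sum f V = f v + sum f (V - {v})" using v assms(1) by (simp add: sum.remove)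
    also have "\<dots> \<le> 0 + card (V - {v})" using v sum_mono[of "V - {v}" f "\<lambda>_. 1"] assms(2) by simp
    also have "\<dots> < card V" using v assms(1) by (metis add_0 card_Diff1_less)
    finally show False using s by simp
  qed
next
  assume "\<forall>v\<in>V. f v = 1" then show "sum f V = card V" by simp
qed

lemma transversal:
  assumes g: "gcover V E L VH EH" and fV: "finite V"
  and I: "I \<subseteq> VH" "\<forall>x\<in>I. \<forall>y\<in>I. \<not> EH x y"
  shows "card I = card V \<longleftrightarrow> (\<forall>v\<in>V. card (I \<inter> L v) = 1)"
proof -
  have fVH: "finite VH" using sg_fin[OF gc_sg[OF g]] .
  have fL: "\<forall>v\<in>V. finite (L v)" using gc_sub[OF g] fVH by (meson finite_subset)
  have le1: "\<forall>v\<in>V. card (I \<inter> L v) \<le> 1"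
  proof
    fix v assume v: "v \<in> V"
    have "\<forall>x\<in>I \<inter> L v. \<forall>y\<in>I \<inter> L v. x = y"
      using gc_clq[OF g] v I(2) by (metis IntD1 IntD2)
    then show "card (I \<inter> L v) \<le> 1" using fL v
      by (metis One_nat_def card_le_Suc0_iff_eq finite_Int)
  qed
  have "I = (\<Union>v\<in>V. I \<inter> L v)" using I(1) gc_un[OF g] by blast
  moreover have "card (\<Union>v\<in>V. I \<inter> L v) = (\<Sum>v\<in>V. card (I \<inter> L v))"
    apply (rule card_UN_disjoint[OF fV])
    using fL gc_disj[OF g] by blast+
  ultimately have "card I = (\<Sum>v\<in>V. card (I \<inter> L v))" by simp
  then show ?thesis using sum_le1_eq_card[OF fV le1] by simp
qed

lemma ncc_TR:
  assumes g: "gcover V E L VH EH" and fV: "finite V"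
  shows "{I. I \<subseteq> VH \<and> (\<forall>x\<in>I. \<forall>y\<in>I. \<not> EH x y) \<and> card I = card V} = TR V L EH"
proof -
  have "(\<Union>u\<in>V. L u) = VH" using gc_un[OF g] .
  then show ?thesis unfolding TR_def using transversal[OF g fV] by auto
qed

lemma DP_le:
  fixes L :: "'v \<Rightarrow> 'b set"
  assumes g: "gcover V E L VH EH" and k: "\<forall>v\<in>V. card (L v) = k"
  shows "DP_poly V E k \<le> card {I. I \<subseteq> VH \<and> (\<forall>x\<in>I. \<forall>y\<in>I. \<not> EH x y) \<and> card I = card V}"
proof -
  have fVH: "finite VH" using sg_fin[OF gc_sg[OF g]] .
  obtain f :: "'b \<Rightarrow> nat" where f: "inj_on f VH" using finite_imp_inj_to_nat_seg[OF fVH] by blast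
  define h where "h z = (undefined :: 'v, f z)" for z
  have h: "inj_on h VH" using f unfolding h_def inj_on_def by auto
  define L' where "L' v = h ` L v" for v
  define VH' where "VH' = h ` VH"
  define EH' where "EH' p q = (\<exists>x\<in>VH. \<exists>y\<in>VH. p = h x \<and> q = h y \<and> EH x y)" for p q
  have hh: "h x = h y \<longleftrightarrow> x = y" if "x \<in> VH" "y \<in> VH" for x y
    using h that by (meson inj_on_eq_iff)
  have EH'_iff: "EH' (h x) (h y) \<longleftrightarrow> EH x y" if "x \<in> VH" "y \<in> VH" for x y
    unfolding EH'_def using hh that by auto
  have LVH: "\<forall>u\<in>V. L u \<subseteq> VH" using gc_sub[OF g] .
  have sg: "simple_graph VH EH" using gc_sg[OF g] .
  have cov: "is_m_fold_cover V E k L' VH' EH'"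
    unfolding is_m_fold_cover_def is_cover_def
  proof (intro conjI)
    show "simple_graph VH' EH'" unfolding simple_graph_def
    proof (intro conjI allI impI)
      show "finite VH'" unfolding VH'_def using fVH by simp
      fix x y assume "EH' x y"
      then obtain a b where ab: "a \<in> VH" "b \<in> VH" "x = h a" "y = h b" "EH a b" unfolding EH'_def by auto
      then show "x \<in> VH'" "y \<in> VH'" unfolding VH'_def by auto
      show "EH' y x" using ab sg_sym[OF sg] EH'_iff by metis
    next
      fix x show "\<not> EH' x x"
      proof
        assume "EH' x x"
        then obtain a b where ab: "a \<in> VH" "b \<in> VH" "x = h a" "x = h b" "EH a b" unfolding EH'_def by auto
        then have "a = b" using hh by auto
        then show False using ab sg_irr[OF sg] by metis
      qed
    qed
    show "\<forall>u\<in>V. L' u \<subseteq> VH'" using LVH unfolding L'_def VH'_def by auto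
    show "(\<Union>u\<in>V. L' u) = VH'" using gc_un[OF g] unfolding L'_def VH'_def by blast
    show "\<forall>u\<in>V. \<forall>v\<in>V. u \<noteq> v \<longrightarrow> L' u \<inter> L' v = {}"
    proof (intro ballI impI)
      fix u v assume uv: "u \<in> V" "v \<in> V" "u \<noteq> v"
      have "L' u \<inter> L' v = h ` (L u \<inter> L v)" unfolding L'_def
        using inj_on_image_Int[OF h] LVH uv by auto
      then show "L' u \<inter> L' v = {}" using gc_disj[OF g] uv by auto
    qed
    show "\<forall>u\<in>V. \<forall>x\<in>L' u. \<forall>y\<in>L' u. x \<noteq> y \<longrightarrow> EH' x y"
    proof (intro ballI impI)
      fix u x y assume a: "u \<in> V" "x \<in> L' u" "y \<in> L' u" "x \<noteq> y"
      then obtain x0 y0 where "x0 \<in> L u" "y0 \<in> L u" "x = h x0" "y = h y0" unfolding L'_def by auto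
      then show "EH' x y" using a LVH EH'_iff gc_clq[OF g] by (metis subsetD)
    qed
    show "\<forall>u\<in>V. \<forall>v\<in>V. \<forall>x\<in>L' u. \<forall>y\<in>L' v. EH' x y \<longrightarrow> u = v \<or> E u v"
    proof (intro ballI impI)
      fix u v x y assume a: "u \<in> V" "v \<in> V" "x \<in> L' u" "y \<in> L' v" "EH' x y"
      then obtain x0 y0 where "x0 \<in> L u" "y0 \<in> L v" "x = h x0" "y = h y0" unfolding L'_def by auto
      then show "u = v \<or> E u v" using a LVH EH'_iff gc_cross[OF g] by (metis subsetD)
    qed
    show "\<forall>u\<in>V. \<forall>v\<in>V. E u v \<longrightarrow> (\<forall>x\<in>L' u. \<forall>y\<in>L' v. \<forall>y'\<in>L' v. EH' x y \<and> EH' x y' \<longrightarrow> y = y')"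
    proof (intro ballI impI)
      fix u v x y y' assume a: "u \<in> V" "v \<in> V" "E u v" "x \<in> L' u" "y \<in> L' v" "y' \<in> L' v" "EH' x y \<and> EH' x y'"
      then obtain x0 y0 y0' where b: "x0 \<in> L u" "y0 \<in> L v" "y0' \<in> L v" "x = h x0" "y = h y0" "y' = h y0'"
        unfolding L'_def by auto
      then have "EH x0 y0" "EH x0 y0'" using a LVH EH'_iff by (meson subsetD)+
      then have "y0 = y0'" using a b gc_mat[OF g] by blast
      then show "y = y'" using b by simp
    qed
    show "\<forall>u\<in>V. card (L' u) = k" using k LVH unfolding L'_def
      by (metis card_image h inj_on_subset)
  qed
  define S where "S = {I. I \<subseteq> VH \<and> (\<forall>x\<in>I. \<forall>y\<in>I. \<not> EH x y) \<and> card I = card V}"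
  have "{I. I \<subseteq> VH' \<and> (\<forall>x\<in>I. \<forall>y\<in>I. \<not> EH' x y) \<and> card I = card V} = image h ` S"
  proof (intro equalityI subsetI)
    fix I' assume "I' \<in> {I. I \<subseteq> VH' \<and> (\<forall>x\<in>I. \<forall>y\<in>I. \<not> EH' x y) \<and> card I = card V}"
    then have a: "I' \<subseteq> VH'" "\<forall>x\<in>I'. \<forall>y\<in>I'. \<not> EH' x y" "card I' = card V" by auto
    define I where "I = VH \<inter> h -` I'"
    have "h ` I = I'" using a(1) unfolding I_def VH'_def by auto
    moreover have "I \<in> S"
    proof -
      have "inj_on h I" using h unfolding I_def by (rule inj_on_subset) auto
      then have "card I = card V" using a(3) \<open>h ` I = I'\<close> card_image by fastforce
      moreover have "\<forall>x\<in>I. \<forall>y\<in>I. \<not> EH x y" unfolding I_def using a(2) EH'_iff by (metis IntD1 IntD2 vimageE)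
      ultimately show ?thesis unfolding S_def I_def by auto
    qed
    ultimately show "I' \<in> image h ` S" by auto
  next
    fix I' assume "I' \<in> image h ` S"
    then obtain I where I: "I \<in> S" "I' = h ` I" by auto
    then have a: "I \<subseteq> VH" "\<forall>x\<in>I. \<forall>y\<in>I. \<not> EH x y" "card I = card V" unfolding S_def by auto
    have "card I' = card V" using I a inj_on_subset[OF h a(1)] by (simp add: card_image)
    moreover have "I' \<subseteq> VH'" using a I unfolding VH'_def by auto
    moreover have "\<forall>x\<in>I'. \<forall>y\<in>I'. \<not> EH' x y" using a I EH'_iff by (auto simp: subset_iff)
    ultimately show "I' \<in> {I. I \<subseteq> VH' \<and> (\<forall>x\<in>I. \<forall>y\<in>I. \<not> EH' x y) \<and> card I = card V}" by auto
  qed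
  moreover have "card (image h ` S) = card S"
    by (rule card_image, rule inj_on_subset[OF inj_on_image_Pow[OF h]]) (auto simp: S_def)
  ultimately have "num_cover_colorings V VH' EH' = card S" unfolding num_cover_colorings_def by simp
  moreover have "DP_poly V E k \<le> num_cover_colorings V VH' EH'"
    unfolding DP_poly_def by (rule cInf_lower) (use cov in auto)
  ultimately show ?thesis unfolding S_def by simp
qed



lemma TR_mono:
  assumes "\<forall>v\<in>V. B v \<subseteq> A v" "\<forall>u\<in>V. \<forall>v\<in>V. u \<noteq> v \<longrightarrow> A u \<inter> A v = {}"
    "\<And>p q. p \<in> (\<Union>v\<in>V. B v) \<Longrightarrow> q \<in> (\<Union>v\<in>V. B v) \<Longrightarrow> EH p q \<Longrightarrow> EH' p q"
  shows "TR V B EH' \<subseteq> TR V A EH"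
proof
  fix I assume I: "I \<in> TR V B EH'"
  then have I1: "I \<subseteq> (\<Union>v\<in>V. B v)" "\<forall>x\<in>I. \<forall>y\<in>I. \<not> EH' x y" "\<forall>v\<in>V. card (I \<inter> B v) = 1"
    unfolding TR_def by auto
  have "I \<subseteq> (\<Union>v\<in>V. A v)" using I1(1) assms(1) by blast
  moreover have "\<forall>x\<in>I. \<forall>y\<in>I. \<not> EH x y"
  proof (intro ballI)
    fix x y assume "x \<in> I" "y \<in> I"
    then show "\<not> EH x y" using I1(1,2) assms(3)[of x y] by (meson subsetD)
  qed
  moreover have "I \<inter> A v = I \<inter> B v" if v: "v \<in> V" for v
  proof
    show "I \<inter> B v \<subseteq> I \<inter> A v" using assms(1) v by blast
    show "I \<inter> A v \<subseteq> I \<inter> B v"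
    proof
      fix p assume p: "p \<in> I \<inter> A v"
      then obtain w where w: "w \<in> V" "p \<in> B w" using I1(1) by blast
      have "p \<in> A w" using w assms(1) by blast
      then have "w = v" using assms(2) v p w(1) by (metis IntD2 IntI empty_iff)
      then show "p \<in> I \<inter> B v" using w p by simp
    qed
  qed
  ultimately show "I \<in> TR V A EH" using I1(3) unfolding TR_def by simp
qed

lemma join_E_simps[simp]:
  "join_E V E None None = False"
  "join_E V E None (Some v) = (v \<in> V)"
  "join_E V E (Some v) None = (v \<in> V)"
  "join_E V E (Some u) (Some v) = E u v"
  unfolding join_E_def by auto

locale jcov =
  fixes V :: "'a set" and E :: "'a \<Rightarrow> 'a \<Rightarrow> bool" and m :: nat
    and L :: "'a option \<Rightarrow> ('a option \<times> nat) set" and VH EH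
  assumes sgG: "simple_graph V E"
  and gc: "gcover (join_V V) (join_E V E) L VH EH"
  and cardL: "\<forall>w\<in>join_V V. card (L w) = m"
begin

abbreviation "W \<equiv> L None"

lemma finV: "finite V" using sg_fin[OF sgG] .
lemma finVH: "finite VH" using sg_fin[OF gc_sg[OF gc]] .
lemma Esym: "E u v \<Longrightarrow> E v u" using sg_sym[OF sgG] by blast
lemma Eirr: "\<not> E u u" using sg_irr[OF sgG] by blast
lemma Ein: "E u v \<Longrightarrow> u \<in> V \<and> v \<in> V" using sg_in[OF sgG] by blast
lemma EHsym: "EH p q \<Longrightarrow> EH q p" using sg_sym[OF gc_sg[OF gc]] by blast
lemma EHirr: "\<not> EH p p" using sg_irr[OF gc_sg[OF gc]] by blast
lemma Jv_simps: "None \<in> join_V V" "(Some v \<in> join_V V) = (v \<in> V)" unfolding join_V_def by auto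
lemma LsubVH: "w \<in> join_V V \<Longrightarrow> L w \<subseteq> VH" using gc_sub[OF gc] by blast
lemma finL: "w \<in> join_V V \<Longrightarrow> finite (L w)" using LsubVH finVH finite_subset by blast
lemma finLS: "v \<in> V \<Longrightarrow> finite (L (Some v))" using finL Jv_simps by blast
lemma cardW: "card W = m" using cardL Jv_simps by blast
lemma cardLS: "v \<in> V \<Longrightarrow> card (L (Some v)) = m" using cardL Jv_simps by blast
lemma disjWS: "v \<in> V \<Longrightarrow> W \<inter> L (Some v) = {}" using gc_disj[OF gc] Jv_simps by blast
lemma disjSS: "u \<in> V \<Longrightarrow> v \<in> V \<Longrightarrow> u \<noteq> v \<Longrightarrow> L (Some u) \<inter> L (Some v) = {}"
  using gc_disj[OF gc] Jv_simps by blast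
lemma ownerS: "u \<in> V \<Longrightarrow> v \<in> V \<Longrightarrow> p \<in> L (Some u) \<Longrightarrow> p \<in> L (Some v) \<Longrightarrow> u = v"
  using disjSS by blast
lemma clqS: "v \<in> V \<Longrightarrow> p \<in> L (Some v) \<Longrightarrow> q \<in> L (Some v) \<Longrightarrow> p \<noteq> q \<Longrightarrow> EH p q"
  using gc_clq[OF gc, rule_format, of "Some v" p q] Jv_simps by blast
lemma crossS: "u \<in> V \<Longrightarrow> v \<in> V \<Longrightarrow> p \<in> L (Some u) \<Longrightarrow> q \<in> L (Some v) \<Longrightarrow> EH p q \<Longrightarrow> u \<noteq> v \<Longrightarrow> E u v"
  using gc_cross[OF gc, rule_format, of "Some u" "Some v" p q] Jv_simps by auto
lemma matS: "E u v \<Longrightarrow> p \<in> L (Some u) \<Longrightarrow> q \<in> L (Some v) \<Longrightarrow> q' \<in> L (Some v) \<Longrightarrow> EH p q \<Longrightarrow> EH p q' \<Longrightarrow> q = q'"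
proof -
  assume a: "E u v" "p \<in> L (Some u)" "q \<in> L (Some v)" "q' \<in> L (Some v)" "EH p q" "EH p q'"
  have "Some u \<in> join_V V" "Some v \<in> join_V V" "join_E V E (Some u) (Some v)" using Ein[OF a(1)] a(1) Jv_simps by auto
  then show "q = q'" using gc_mat[OF gc, rule_format, of "Some u" "Some v" p q q'] a by blast
qed
lemma matWS: "v \<in> V \<Longrightarrow> x \<in> W \<Longrightarrow> q \<in> L (Some v) \<Longrightarrow> q' \<in> L (Some v) \<Longrightarrow> EH x q \<Longrightarrow> EH x q' \<Longrightarrow> q = q'"
proof -
  assume a: "v \<in> V" "x \<in> W" "q \<in> L (Some v)" "q' \<in> L (Some v)" "EH x q" "EH x q'"
  have "Some v \<in> join_V V" "join_E V E None (Some v)" using a Jv_simps by auto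
  then show "q = q'" using gc_mat[OF gc, rule_format, of None "Some v" x q q'] a Jv_simps(1) by blast
qed
lemma matSW: "v \<in> V \<Longrightarrow> p \<in> L (Some v) \<Longrightarrow> x \<in> W \<Longrightarrow> x' \<in> W \<Longrightarrow> EH p x \<Longrightarrow> EH p x' \<Longrightarrow> x = x'"
proof -
  assume a: "v \<in> V" "p \<in> L (Some v)" "x \<in> W" "x' \<in> W" "EH p x" "EH p x'"
  have "Some v \<in> join_V V" "join_E V E (Some v) None" using a Jv_simps by auto
  then show "x = x'" using gc_mat[OF gc, rule_format, of "Some v" None p x x'] a Jv_simps(1) by blast
qed

lemma finJv: "finite (join_V V)" unfolding join_V_def using finV by simp
lemma cardJv: "card (join_V V) = Suc (card V)"
  unfolding join_V_def using finV by (simp add: card_image)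

definition Lx :: "'a option \<times> nat \<Rightarrow> 'a \<Rightarrow> ('a option \<times> nat) set" where
  "Lx x v = L (Some v) - {z. EH x z}"

lemma ncc_eq: "num_cover_colorings (join_V V) VH EH = card (TR (join_V V) L EH)"
  unfolding num_cover_colorings_def using ncc_TR[OF gc finJv] by simp

lemma finTRJ: "finite (TR (join_V V) L EH)"
  by (rule finite_TR[OF finJv]) (use finL in blast)

lemma count_split:
  "card (TR (join_V V) L EH) = (\<Sum>x\<in>W. card {I \<in> TR (join_V V) L EH. x \<in> I})"
proof -
  have "TR (join_V V) L EH = (\<Union>x\<in>W. {I \<in> TR (join_V V) L EH. x \<in> I})"
  proof (intro equalityI subsetI)
    fix I assume I: "I \<in> TR (join_V V) L EH"
    then have "card (I \<inter> W) = 1" unfolding TR_def using Jv_simps by blast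
    then obtain x where "x \<in> I \<inter> W" by (metis card_1_singletonE insertI1)
    then show "I \<in> (\<Union>x\<in>W. {I \<in> TR (join_V V) L EH. x \<in> I})" using I by blast
  qed blast
  moreover have "card (\<Union>x\<in>W. {I \<in> TR (join_V V) L EH. x \<in> I}) = (\<Sum>x\<in>W. card {I \<in> TR (join_V V) L EH. x \<in> I})"
  proof (rule card_UN_disjoint)
    show "finite W" using finL Jv_simps by blast
    show "\<forall>i\<in>W. finite {I \<in> TR (join_V V) L EH. i \<in> I}" using finTRJ by simp
    show "\<forall>i\<in>W. \<forall>j\<in>W. i \<noteq> j \<longrightarrow> {I \<in> TR (join_V V) L EH. i \<in> I} \<inter> {I \<in> TR (join_V V) L EH. j \<in> I} = {}"
    proof (intro ballI impI)
      fix i j assume ij: "i \<in> W" "j \<in> W" "i \<noteq> j"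
      show "{I \<in> TR (join_V V) L EH. i \<in> I} \<inter> {I \<in> TR (join_V V) L EH. j \<in> I} = {}"
      proof (rule ccontr)
        assume "\<not> ?thesis"
        then obtain I where I: "I \<in> TR (join_V V) L EH" "i \<in> I" "j \<in> I" by blast
        then have "card (I \<inter> W) = 1" unfolding TR_def using Jv_simps by blast
        moreover have "{i, j} \<subseteq> I \<inter> W" using I ij by blast
        moreover have "finite (I \<inter> W)" by (rule card_ge_0_finite) (simp add: calculation(1))
        ultimately have "card {i, j} \<le> 1" by (metis card_mono)
        then show False using ij by simp
      qed
    qed
  qed
  ultimately show ?thesis by simp
qed

lemma col_x:
  assumes x: "x \<in> W"
  shows "card (TR V (Lx x) EH) \<le> card {I \<in> TR (join_V V) L EH. x \<in> I}"
proof -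
  have "inj_on (insert x) (TR V (Lx x) EH)"
  proof (rule inj_onI)
    fix J1 J2 assume J: "J1 \<in> TR V (Lx x) EH" "J2 \<in> TR V (Lx x) EH" "insert x J1 = insert x J2"
    have "x \<notin> J1" "x \<notin> J2" using J(1,2) x disjWS unfolding TR_def Lx_def by blast+
    then show "J1 = J2" using J(3) by (metis insert_ident)
  qed
  moreover have "insert x ` TR V (Lx x) EH \<subseteq> {I \<in> TR (join_V V) L EH. x \<in> I}"
  proof (rule image_subsetI)
    fix J assume J: "J \<in> TR V (Lx x) EH"
    then have J1: "J \<subseteq> (\<Union>v\<in>V. Lx x v)" "\<forall>p\<in>J. \<forall>q\<in>J. \<not> EH p q" "\<forall>v\<in>V. card (J \<inter> Lx x v) = 1"
      unfolding TR_def by auto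
    have JW: "J \<inter> W = {}" using J1(1) disjWS unfolding Lx_def by blast
    have "insert x J \<subseteq> (\<Union>w\<in>join_V V. L w)" using J1(1) x unfolding Lx_def join_V_def by blast
    moreover have "\<forall>p\<in>insert x J. \<forall>q\<in>insert x J. \<not> EH p q"
    proof (intro ballI)
      fix p q assume pq: "p \<in> insert x J" "q \<in> insert x J"
      have nx: "\<forall>q\<in>J. \<not> EH x q" using J1(1) unfolding Lx_def by blast
      show "\<not> EH p q"
      proof (cases "p = x")
        case True
        then show ?thesis using pq nx EHirr EHsym by (metis insert_iff)
      next
        case False
        then have "p \<in> J" using pq by auto
        then show ?thesis using pq J1(2) nx EHsym by (metis insert_iff)
      qed
    qed
    moreover have "\<forall>w\<in>join_V V. card (insert x J \<inter> L w) = 1"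
    proof
      fix w assume w: "w \<in> join_V V"
      show "card (insert x J \<inter> L w) = 1"
      proof (cases w)
        case None
        then have "insert x J \<inter> L w = {x}" using JW x by auto
        then show ?thesis by simp
      next
        case (Some v)
        then have v: "v \<in> V" using w Jv_simps by auto
        have "insert x J \<inter> L w = J \<inter> Lx x v"
        proof
          show "insert x J \<inter> L w \<subseteq> J \<inter> Lx x v"
          proof
            fix p assume p: "p \<in> insert x J \<inter> L w"
            then have "p \<noteq> x" using x disjWS[OF v] Some by auto
            then have pJ: "p \<in> J" using p by auto
            then obtain v' where v': "v' \<in> V" "p \<in> Lx x v'" using J1(1) by auto
            have "p \<in> L (Some v)" using p Some by auto
            moreover have "p \<in> L (Some v')" using v'(2) unfolding Lx_def by simp
            ultimately have "v' = v" using ownerS[OF v'(1) v] by simp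
            then show "p \<in> J \<inter> Lx x v" using pJ \<open>p \<in> Lx x v'\<close> by simp
          qed
          show "J \<inter> Lx x v \<subseteq> insert x J \<inter> L w" unfolding Lx_def using Some by auto
        qed
        then show ?thesis using J1(3) v by simp
      qed
    qed
    ultimately have "insert x J \<in> TR (join_V V) L EH" unfolding TR_def by simp
    then show "insert x J \<in> {I \<in> TR (join_V V) L EH. x \<in> I}" by simp
  qed
  moreover have "finite {I \<in> TR (join_V V) L EH. x \<in> I}" using finTRJ by simp
  ultimately show ?thesis using card_mono[of "{I \<in> TR (join_V V) L EH. x \<in> I}" "insert x ` TR V (Lx x) EH"]
    card_image[of "insert x" "TR V (Lx x) EH"] by linarith
qed

end


context jcov begin

definition EHC :: "('a \<Rightarrow> ('a option \<times> nat) set) \<Rightarrow> bool \<Rightarrow> 'a option \<times> nat \<Rightarrow> 'a option \<times> nat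
   \<Rightarrow> 'a option \<times> nat \<Rightarrow> 'a option \<times> nat \<Rightarrow> bool" where
  "EHC B flag a b p q = (p \<in> (\<Union>v\<in>V. B v) \<and> q \<in> (\<Union>v\<in>V. B v) \<and>
      (EH p q \<or> (flag \<and> (p = a \<and> q = b \<or> p = b \<and> q = a))))"

lemma subcover:
  assumes B: "\<forall>v\<in>V. B v \<subseteq> L (Some v)" "\<forall>v\<in>V. card (B v) = k"
  and fl: "flag \<Longrightarrow> u0 \<in> V \<and> v0 \<in> V \<and> E u0 v0 \<and> a \<in> B u0 \<and> b \<in> B v0 \<and>
              (\<forall>q\<in>B v0. \<not> EH a q) \<and> (\<forall>q\<in>B u0. \<not> EH b q)"
  shows "DP_poly V E k \<le> card (TR V B (EHC B flag a b))"
proof -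
  define U where "U = (\<Union>v\<in>V. B v)"
  have ab: "a \<noteq> b" if f: flag
  proof
    assume "a = b"
    have "u0 \<noteq> v0" using fl[OF f] Eirr by metis
    moreover have "a \<in> L (Some u0)" "b \<in> L (Some v0)" "u0 \<in> V" "v0 \<in> V" using fl[OF f] B(1) by blast+
    ultimately show False using ownerS \<open>a = b\<close> by metis
  qed
  have owner: "u = w" if "u \<in> V" "w \<in> V" "p \<in> B u" "p \<in> B w" for u w p
    using ownerS[OF that(1,2)] that(3,4) B(1) that(1,2) by blast
  have finU: "finite U" unfolding U_def using finV finLS B(1) by (meson finite_UN_I finite_subset)
  have EHC_U: "EHC B flag a b p q = (p \<in> U \<and> q \<in> U \<and> (EH p q \<or> (flag \<and> (p = a \<and> q = b \<or> p = b \<and> q = a))))" for p q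
    unfolding EHC_def U_def by simp
  have sg: "simple_graph U (EHC B flag a b)"
    unfolding simple_graph_def
  proof (intro conjI allI impI)
    show "finite U" by (rule finU)
    fix x y assume h: "EHC B flag a b x y"
    then show "x \<in> U" "y \<in> U" unfolding EHC_U by auto
    show "EHC B flag a b y x" using h unfolding EHC_U by (metis EHsym)
  next
    fix x show "\<not> EHC B flag a b x x" unfolding EHC_U using EHirr ab by metis
  qed
  have mat: "q = q'" if h: "u \<in> V" "w \<in> V" "E u w" "p \<in> B u" "q \<in> B w" "q' \<in> B w"
    "EHC B flag a b p q" "EHC B flag a b p q'" for u w p q q'
  proof -
    have Lh: "p \<in> L (Some u)" "q \<in> L (Some w)" "q' \<in> L (Some w)" using h B(1) by blast+
    consider "EH p q" "EH p q'" | "flag" "p = a \<and> q = b \<or> p = b \<and> q = a" "EH p q'"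
      | "flag" "p = a \<and> q' = b \<or> p = b \<and> q' = a" "EH p q"
      | "flag" "p = a \<and> q = b \<or> p = b \<and> q = a" "p = a \<and> q' = b \<or> p = b \<and> q' = a"
      using h(7,8) unfolding EHC_U by blast
    then show ?thesis
    proof cases
      case 1 then show ?thesis using matS[OF h(3) Lh] by blast
    next
      case 2
      have F: "u0 \<in> V" "v0 \<in> V" "a \<in> B u0" "b \<in> B v0" "\<forall>q\<in>B v0. \<not> EH a q" "\<forall>q\<in>B u0. \<not> EH b q"
        using fl[OF 2(1)] by blast+
      show ?thesis
      proof (cases "p = a \<and> q = b")
        case True
        then have "w = v0" using owner[OF h(2) F(2)] h(5) F(4) by blast
        then show ?thesis using F(5) 2(3) True h(6) by blast
      next
        case False
        then have pq: "p = b" "q = a" using 2(2) by blast+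
        then have "w = u0" using owner[OF h(2) F(1)] h(5) F(3) by blast
        then show ?thesis using F(6) 2(3) pq h(6) by blast
      qed
    next
      case 3
      have F: "u0 \<in> V" "v0 \<in> V" "a \<in> B u0" "b \<in> B v0" "\<forall>q\<in>B v0. \<not> EH a q" "\<forall>q\<in>B u0. \<not> EH b q"
        using fl[OF 3(1)] by blast+
      show ?thesis
      proof (cases "p = a \<and> q' = b")
        case True
        then have "w = v0" using owner[OF h(2) F(2)] h(6) F(4) by blast
        then show ?thesis using F(5) 3(3) True h(5) by blast
      next
        case False
        then have pq: "p = b" "q' = a" using 3(2) by blast+
        then have "w = u0" using owner[OF h(2) F(1)] h(6) F(3) by blast
        then show ?thesis using F(6) 3(3) pq h(5) by blast
      qed
    next
      case 4 then show ?thesis using ab by blast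
    qed
  qed
  have g: "gcover V E B U (EHC B flag a b)"
    unfolding gcover_def
  proof (intro conjI)
    show "simple_graph U (EHC B flag a b)" by (rule sg)
    show "\<forall>u\<in>V. B u \<subseteq> U" unfolding U_def by blast
    show "(\<Union>u\<in>V. B u) = U" unfolding U_def by simp
    show "\<forall>u\<in>V. \<forall>v\<in>V. u \<noteq> v \<longrightarrow> B u \<inter> B v = {}" using disjSS B(1) by blast
    show "\<forall>u\<in>V. \<forall>x\<in>B u. \<forall>y\<in>B u. x \<noteq> y \<longrightarrow> EHC B flag a b x y"
    proof (intro ballI impI)
      fix u x y assume h: "u \<in> V" "x \<in> B u" "y \<in> B u" "x \<noteq> y"
      then have "EH x y" using clqS[OF h(1) _ _ h(4)] B(1) by blast
      then show "EHC B flag a b x y" unfolding EHC_U U_def using h by blast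
    qed
    show "\<forall>u\<in>V. \<forall>v\<in>V. \<forall>x\<in>B u. \<forall>y\<in>B v. EHC B flag a b x y \<longrightarrow> u = v \<or> E u v"
    proof (intro ballI impI)
      fix u w p q assume h: "u \<in> V" "w \<in> V" "p \<in> B u" "q \<in> B w" "EHC B flag a b p q"
      show "u = w \<or> E u w"
      proof (cases "u = w")
        case True then show ?thesis by simp
      next
        case False
        consider "EH p q" | "flag" "p = a \<and> q = b \<or> p = b \<and> q = a" using h(5) unfolding EHC_U by blast
        then show ?thesis
        proof cases
          case 1
          then show ?thesis using crossS[OF h(1,2) _ _ 1 False] h B(1) by blast
        next
          case 2
          have F: "u0 \<in> V" "v0 \<in> V" "a \<in> B u0" "b \<in> B v0" "E u0 v0"
            using fl[OF 2(1)] by blast+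
          show ?thesis
          proof (cases "p = a \<and> q = b")
            case True
            then have "u = u0" "w = v0" using owner h F by blast+
            then show ?thesis using F(5) by simp
          next
            case False
            then have "p = b" "q = a" using 2(2) by blast+
            then have "u = v0" "w = u0" using owner h F by blast+
            then show ?thesis using F(5) Esym by simp
          qed
        qed
      qed
    qed
    show "\<forall>u\<in>V. \<forall>v\<in>V. E u v \<longrightarrow> (\<forall>x\<in>B u. \<forall>y\<in>B v. \<forall>y'\<in>B v.
            EHC B flag a b x y \<and> EHC B flag a b x y' \<longrightarrow> y = y')"
      using mat by blast
  qed
  have "DP_poly V E k \<le> card {I. I \<subseteq> U \<and> (\<forall>x\<in>I. \<forall>y\<in>I. \<not> EHC B flag a b x y) \<and> card I = card V}"
    by (rule DP_le[OF g B(2)])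
  also have "\<dots> = card (TR V B (EHC B flag a b))" using ncc_TR[OF g finV] by simp
  finally show ?thesis .
qed

lemma TR_EHC_sub:
  assumes "\<forall>v\<in>V. B v \<subseteq> A v" "\<forall>v\<in>V. A v \<subseteq> L (Some v)"
  shows "TR V B (EHC B flag a b) \<subseteq> TR V A EH"
proof (rule TR_mono[OF assms(1)])
  show "\<forall>u\<in>V. \<forall>v\<in>V. u \<noteq> v \<longrightarrow> A u \<inter> A v = {}" using disjSS assms(2) by blast
  fix p q assume "p \<in> (\<Union>v\<in>V. B v)" "q \<in> (\<Union>v\<in>V. B v)" "EH p q"
  then show "EHC B flag a b p q" unfolding EHC_def by blast
qed

lemma Lx_sub: "Lx x v \<subseteq> L (Some v)" unfolding Lx_def by blast

lemma card_Lx: assumes "x \<in> W" "v \<in> V" shows "m - 1 \<le> card (Lx x v)"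
proof -
  have "card (L (Some v) \<inter> {z. EH x z}) \<le> 1"
  proof -
    have "\<forall>p\<in>L (Some v) \<inter> {z. EH x z}. \<forall>q\<in>L (Some v) \<inter> {z. EH x z}. p = q"
      using matWS[OF assms(2,1)] by blast
    moreover have "finite (L (Some v) \<inter> {z. EH x z})" using finLS[OF assms(2)] by simp
    ultimately show ?thesis using card_le_Suc0_iff_eq by (metis One_nat_def)
  qed
  moreover have "Lx x v = L (Some v) - (L (Some v) \<inter> {z. EH x z})" unfolding Lx_def by blast
  moreover have "card (L (Some v) - (L (Some v) \<inter> {z. EH x z})) = m - card (L (Some v) \<inter> {z. EH x z})"
    using cardLS[OF assms(2)] finLS[OF assms(2)] by (simp add: card_Diff_subset)
  ultimately show ?thesis by simp
qed

lemma choose_B: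
  assumes "\<forall>v\<in>V. k \<le> card (A v)"
  obtains B where "\<forall>v\<in>V. B v \<subseteq> A v" "\<forall>v\<in>V. card (B v) = k"
proof -
  have "\<forall>v\<in>V. \<exists>S. S \<subseteq> A v \<and> card S = k"
    using assms by (metis obtain_subset_with_card_n)
  then obtain B where "\<forall>v\<in>V. B v \<subseteq> A v \<and> card (B v) = k" by metis
  then show ?thesis using that by blast
qed

lemma DP_x:
  assumes x: "x \<in> W"
  shows "DP_poly V E (m - 1) \<le> card (TR V (Lx x) EH)"
proof -
  obtain B where B: "\<forall>v\<in>V. B v \<subseteq> Lx x v" "\<forall>v\<in>V. card (B v) = m - 1"
    using choose_B[of "m - 1" "Lx x"] card_Lx[OF x] by blast
  have BL: "\<forall>v\<in>V. B v \<subseteq> L (Some v)" using B(1) Lx_sub by blast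
  have "DP_poly V E (m - 1) \<le> card (TR V B (EHC B False x x))"
    by (rule subcover[OF BL B(2)]) simp
  also have "\<dots> \<le> card (TR V (Lx x) EH)"
  proof (rule card_mono)
    show "finite (TR V (Lx x) EH)" by (rule finite_TR[OF finV]) (use finLS Lx_sub finite_subset in metis)
    show "TR V B (EHC B False x x) \<subseteq> TR V (Lx x) EH"
      by (rule TR_EHC_sub) (use B(1) Lx_sub in blast)+
  qed
  finally show ?thesis .
qed

end


context jcov begin

lemma greedy_L:
  fixes r :: "'a \<Rightarrow> nat"
  assumes A: "\<forall>v\<in>V. A v \<subseteq> L (Some v)"
  and cond: "\<forall>v\<in>V. c v + card {w\<in>V. w \<noteq> v \<and> r w \<le> r v \<and> (\<exists>x\<in>A v. \<exists>y\<in>A w. EH x y)} \<le> card (A v)"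
  shows "(\<Prod>v\<in>V. c v) \<le> card (TR V A EH)"
proof (rule greedy[OF finV _ _ _ _ _ cond])
  show "\<forall>v\<in>V. finite (A v)" using A finLS finite_subset by metis
  show "\<forall>v\<in>V. \<forall>w\<in>V. v \<noteq> w \<longrightarrow> A v \<inter> A w = {}" using A disjSS by blast
  show "\<forall>x y. EH x y \<longrightarrow> EH y x" using EHsym by blast
  show "\<forall>x. \<not> EH x x" using EHirr by blast
  show "\<forall>v\<in>V. \<forall>w\<in>V. v \<noteq> w \<longrightarrow> (\<forall>x\<in>A w. \<forall>y\<in>A v. \<forall>y'\<in>A v. EH x y \<and> EH x y' \<longrightarrow> y = y')"
  proof (intro ballI impI)
    fix v w x y y' assume h: "v \<in> V" "w \<in> V" "v \<noteq> w" "x \<in> A w" "y \<in> A v" "y' \<in> A v" "EH x y \<and> EH x y'"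
    have L: "x \<in> L (Some w)" "y \<in> L (Some v)" "y' \<in> L (Some v)" using A h by blast+
    have "E w v" using crossS[OF h(2,1) L(1,2)] h(3,7) by metis
    then show "y = y'" using matS L h(7) by blast
  qed
qed

lemma nonfront:
  fixes r :: "'a \<Rightarrow> nat"
  assumes A: "\<forall>v\<in>V. A v \<subseteq> L (Some v)"
  and r: "inj_on r V" and d: "\<forall>v\<in>V. card {w\<in>V. E v w \<and> r w < r v} \<le> d"
  and F: "F \<subseteq> V" and g: "\<forall>w\<in>F. g w < K"
  and w: "w \<in> V" "w \<notin> F"
  shows "card {w'\<in>V. w' \<noteq> w \<and> (\<lambda>z. if z \<in> F then g z else r z + K) w' \<le> (\<lambda>z. if z \<in> F then g z else r z + K) w
            \<and> (\<exists>x\<in>A w. \<exists>y\<in>A w'. EH x y)} \<le> card F + d"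
proof -
  let ?S = "{w'\<in>V. w' \<noteq> w \<and> (\<lambda>z. if z \<in> F then g z else r z + K) w' \<le> (\<lambda>z. if z \<in> F then g z else r z + K) w
            \<and> (\<exists>x\<in>A w. \<exists>y\<in>A w'. EH x y)}"
  have sub: "?S \<subseteq> F \<union> {w'\<in>V. E w w' \<and> r w' < r w}"
  proof
    fix w' assume h: "w' \<in> ?S"
    show "w' \<in> F \<union> {w'\<in>V. E w w' \<and> r w' < r w}"
    proof (cases "w' \<in> F")
      case True then show ?thesis by simp
    next
      case False
      then have le: "r w' \<le> r w" using h w(2) by simp
      have ne: "w' \<noteq> w" "w' \<in> V" using h by auto
      then have "r w' \<noteq> r w" using r w(1) by (meson inj_on_eq_iff)
      then have "r w' < r w" using le by simp
      moreover obtain x y where xy: "x \<in> A w" "y \<in> A w'" "EH x y" using h by blast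
      then have "E w w'" using crossS[OF w(1) ne(2)] A w(1) ne by blast
      ultimately show ?thesis using ne by simp
    qed
  qed
  have fF: "finite F" using F finV finite_subset by blast
  have "card ?S \<le> card (F \<union> {w'\<in>V. E w w' \<and> r w' < r w})"
    by (rule card_mono[OF _ sub]) (use fF finV in auto)
  also have "\<dots> \<le> card F + card {w'\<in>V. E w w' \<and> r w' < r w}" by (rule card_Un_le)
  also have "\<dots> \<le> card F + d" using d w(1) by simp
  finally show ?thesis .
qed

lemma finTR: "\<forall>v\<in>V. A v \<subseteq> L (Some v) \<Longrightarrow> finite (TR V A EH)"
  by (rule finite_TR[OF finV]) (use finLS finite_subset in metis)

lemma caseB:
  fixes r :: "'a \<Rightarrow> nat"
  assumes x0: "x0 \<in> W" and v0: "v0 \<in> V" and nn: "\<forall>z\<in>L (Some v0). \<not> EH x0 z"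
  and r: "inj_on r V" and d: "\<forall>v\<in>V. card {w\<in>V. E v w \<and> r w < r v} \<le> d"
  and md: "d + 4 \<le> m"
  shows "DP_poly V E (m - 1) + (m - d - 2) ^ (card V - 1) \<le> card (TR V (Lx x0) EH)"
proof -
  have Lx0: "Lx x0 v0 = L (Some v0)" unfolding Lx_def using nn by blast
  have "L (Some v0) \<noteq> {}" using cardLS[OF v0] md by auto
  then obtain c where c: "c \<in> L (Some v0)" by blast
  obtain B0 where B0: "\<forall>v\<in>V. B0 v \<subseteq> Lx x0 v" "\<forall>v\<in>V. card (B0 v) = m - 1"
    using choose_B[of "m - 1" "Lx x0"] card_Lx[OF x0] by blast
  define B where "B = B0(v0 := L (Some v0) - {c})"
  have BLx: "\<forall>v\<in>V. B v \<subseteq> Lx x0 v" using B0(1) Lx0 unfolding B_def by auto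
  have BL: "\<forall>v\<in>V. B v \<subseteq> L (Some v)" using BLx Lx_sub by blast
  have Bc: "\<forall>v\<in>V. card (B v) = m - 1"
    using B0(2) cardLS[OF v0] c finLS[OF v0] unfolding B_def by simp
  define T1 where "T1 = TR V B (EHC B False c c)"
  have DP1: "DP_poly V E (m - 1) \<le> card T1" unfolding T1_def by (rule subcover[OF BL Bc]) simp
  have T1s: "T1 \<subseteq> TR V (Lx x0) EH" unfolding T1_def by (rule TR_EHC_sub[OF BLx]) (use Lx_sub in blast)
  define A' where "A' = B(v0 := {c})"
  have A'Lx: "\<forall>v\<in>V. A' v \<subseteq> Lx x0 v" using BLx c Lx0 unfolding A'_def by auto
  have A'L: "\<forall>v\<in>V. A' v \<subseteq> L (Some v)" using A'Lx Lx_sub by blast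
  define T2 where "T2 = TR V A' EH"
  have T2s: "T2 \<subseteq> TR V (Lx x0) EH" unfolding T2_def
  proof (rule TR_mono[OF A'Lx])
    show "\<forall>u\<in>V. \<forall>v\<in>V. u \<noteq> v \<longrightarrow> Lx x0 u \<inter> Lx x0 v = {}" using disjSS Lx_sub by blast
  qed
  have dis: "T1 \<inter> T2 = {}"
  proof (rule ccontr)
    assume "T1 \<inter> T2 \<noteq> {}"
    then obtain J where J: "J \<in> T1" "J \<in> T2" by blast
    have "card (J \<inter> A' v0) = 1" using J(2) v0 unfolding T2_def TR_def by blast
    moreover have "A' v0 = {c}" unfolding A'_def by simp
    ultimately have "card (J \<inter> {c}) = 1" by simp
    then have "J \<inter> {c} \<noteq> {}" by (metis card.empty zero_neq_one)
    then have "c \<in> J" by blast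
    then obtain w where w: "w \<in> V" "c \<in> B w" using J(1) unfolding T1_def TR_def by blast
    then have "w = v0" using ownerS[OF w(1) v0] BL c by blast
    then show False using w unfolding B_def by simp
  qed
  define r' where "r' = (\<lambda>z. if z \<in> {v0} then (0::nat) else r z + 1)"
  define cc where "cc = (\<lambda>z. if z \<in> {v0} then 1 else m - d - 2)"
  have G: "(\<Prod>v\<in>V. cc v) \<le> card T2" unfolding T2_def
  proof (rule greedy_L[OF A'L, of cc r'], rule ballI)
    fix w assume w: "w \<in> V"
    show "cc w + card {w'\<in>V. w' \<noteq> w \<and> r' w' \<le> r' w \<and> (\<exists>x\<in>A' w. \<exists>y\<in>A' w'. EH x y)} \<le> card (A' w)"
    proof (cases "w = v0")
      case True
      have "{w'\<in>V. w' \<noteq> w \<and> r' w' \<le> r' w \<and> (\<exists>x\<in>A' w. \<exists>y\<in>A' w'. EH x y)} = {}"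
        using True unfolding r'_def by auto
      then have "card {w'\<in>V. w' \<noteq> w \<and> r' w' \<le> r' w \<and> (\<exists>x\<in>A' w. \<exists>y\<in>A' w'. EH x y)} = 0"
        by (metis card.empty)
      moreover have "card (A' w) = 1" by (simp add: A'_def True)
      ultimately show ?thesis using True unfolding cc_def by simp
    next
      case False
      have "card {w'\<in>V. w' \<noteq> w \<and> r' w' \<le> r' w \<and> (\<exists>x\<in>A' w. \<exists>y\<in>A' w'. EH x y)} \<le> card {v0} + d"
        unfolding r'_def by (rule nonfront[OF A'L r d]) (use v0 w False in auto)
      moreover have "card (A' w) = m - 1" using Bc w False unfolding A'_def by simp
      ultimately show ?thesis using False md unfolding cc_def by simp
    qed
  qed
  have "(\<Prod>v\<in>V. cc v) = (m - d - 2) ^ card (V - {v0})"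
    unfolding cc_def by (simp add: prod.If_cases finV Diff_eq)
  also have "card (V - {v0}) = card V - 1" using v0 finV by simp
  finally have G2: "(m - d - 2) ^ (card V - 1) \<le> card T2" using G by simp
  have "card (T1 \<union> T2) = card T1 + card T2"
    by (rule card_Un_disjoint) (use T1s T2s finTR[of "Lx x0"] Lx_sub dis finite_subset in blast)+
  moreover have "card (T1 \<union> T2) \<le> card (TR V (Lx x0) EH)"
    by (rule card_mono) (use T1s T2s finTR[of "Lx x0"] Lx_sub in blast)+
  ultimately show ?thesis using DP1 G2 by linarith
qed

end


context jcov begin

definition sig :: "'a \<Rightarrow> 'a option \<times> nat \<Rightarrow> 'a option \<times> nat" where
  "sig v x = (THE z. z \<in> L (Some v) \<and> EH x z)"

definition full :: bool where
  "full = (\<forall>x\<in>W. \<forall>v\<in>V. \<exists>z\<in>L (Some v). EH x z)"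

lemma sig: assumes "full" "x \<in> W" "v \<in> V" shows "sig v x \<in> L (Some v) \<and> EH x (sig v x)"
proof -
  obtain z where z: "z \<in> L (Some v)" "EH x z" using assms unfolding full_def by blast
  have "\<exists>!z. z \<in> L (Some v) \<and> EH x z"
  proof (rule ex1I[of _ z])
    show "z \<in> L (Some v) \<and> EH x z" using z by simp
    fix z' assume "z' \<in> L (Some v) \<and> EH x z'"
    then show "z' = z" using matWS[OF assms(3,2)] z by blast
  qed
  then show ?thesis unfolding sig_def by (rule theI')
qed

lemma sig_uniq: "full \<Longrightarrow> x \<in> W \<Longrightarrow> v \<in> V \<Longrightarrow> z \<in> L (Some v) \<Longrightarrow> EH x z \<Longrightarrow> z = sig v x"
  using sig matWS by blast

lemma sig_inj: assumes "full" "v \<in> V" "x \<in> W" "y \<in> W" "sig v x = sig v y" shows "x = y"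
proof -
  have "EH (sig v x) x" "EH (sig v x) y" using sig[OF assms(1,3,2)] sig[OF assms(1,4,2)] assms(5) EHsym by metis+
  then show ?thesis using matSW[OF assms(2) _ assms(3,4)] sig[OF assms(1,3,2)] by blast
qed

lemma Lx_full: assumes "full" "x \<in> W" "v \<in> V" shows "Lx x v = L (Some v) - {sig v x}"
proof
  show "Lx x v \<subseteq> L (Some v) - {sig v x}" unfolding Lx_def using sig[OF assms] by blast
  show "L (Some v) - {sig v x} \<subseteq> Lx x v" unfolding Lx_def using sig_uniq[OF assms] by blast
qed

lemma caseA2:
  fixes r :: "'a \<Rightarrow> nat"
  assumes fu: "full" and u: "u \<in> V" and v: "v \<in> V" and uv: "E u v"
  and x: "x \<in> W" and y: "y \<in> W" and xy: "x \<noteq> y" and ee: "EH (sig u x) (sig v y)"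
  and r: "inj_on r V" and d: "\<forall>v\<in>V. card {w\<in>V. E v w \<and> r w < r v} \<le> d"
  and md: "d + 4 \<le> m"
  shows "DP_poly V E (m - 1) + (m - d - 3) ^ (card V - 2) \<le> card (TR V (Lx x) EH)"
proof -
  have une: "u \<noteq> v" using uv Eirr by metis
  have cLx: "card (Lx x w) = m - 1" if "w \<in> V" for w
    using Lx_full[OF fu x that] sig[OF fu x that] cardLS[OF that] finLS[OF that] by simp
  define b where "b = sig v y"
  have bv: "b \<in> Lx x v"
  proof -
    have "sig v y \<noteq> sig v x" using sig_inj[OF fu v x y] xy by metis
    moreover have "sig v y \<in> L (Some v)" using sig[OF fu y v] by simp
    ultimately show ?thesis unfolding b_def Lx_full[OF fu x v] by simp
  qed
  have nb: "\<forall>q\<in>Lx x u. \<not> EH b q"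
  proof (intro ballI notI)
    fix q assume q: "q \<in> Lx x u" "EH b q"
    have e1: "EH b (sig u x)" using EHsym[OF ee] unfolding b_def .
    have bL: "b \<in> L (Some v)" using bv Lx_sub by blast
    have qL: "q \<in> L (Some u)" using q(1) Lx_sub by blast
    have sL: "sig u x \<in> L (Some u)" using sig[OF fu x u] by simp
    have "q = sig u x" using matS[OF Esym[OF uv] bL qL sL q(2) e1] .
    then show False using q(1) unfolding Lx_full[OF fu x u] by simp
  qed
  have "\<exists>a\<in>Lx x u. \<forall>q\<in>Lx x v. \<not> EH a q"
  proof (rule ccontr)
    assume "\<not> ?thesis"
    then have all: "\<forall>a\<in>Lx x u. \<exists>q. q \<in> Lx x v \<and> EH a q" by blast
    define phi where "phi a = (SOME q. q \<in> Lx x v \<and> EH a q)" for a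
    have phi: "phi a \<in> Lx x v \<and> EH a (phi a)" if "a \<in> Lx x u" for a
    proof -
      have "\<exists>q. q \<in> Lx x v \<and> EH a q" using all that by blast
      then show ?thesis unfolding phi_def by (rule someI_ex)
    qed
    have "inj_on phi (Lx x u)"
    proof (rule inj_onI)
      fix a1 a2 assume a: "a1 \<in> Lx x u" "a2 \<in> Lx x u" "phi a1 = phi a2"
      have e1: "EH (phi a1) a1" using EHsym phi[OF a(1)] by blast
      have e2: "EH (phi a1) a2" using EHsym phi[OF a(2)] a(3) by metis
      have pL: "phi a1 \<in> L (Some v)" using phi[OF a(1)] Lx_sub by blast
      have aL: "a1 \<in> L (Some u)" "a2 \<in> L (Some u)" using a Lx_sub by blast+
      show "a1 = a2" using matS[OF Esym[OF uv] pL aL e1 e2] .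
    qed
    moreover have "phi ` Lx x u \<subseteq> Lx x v - {b}"
    proof
      fix q assume "q \<in> phi ` Lx x u"
      then obtain a where a: "a \<in> Lx x u" "q = phi a" by blast
      have "q \<noteq> b" using phi[OF a(1)] nb a EHsym by metis
      then show "q \<in> Lx x v - {b}" using phi[OF a(1)] a(2) by blast
    qed
    moreover have "finite (Lx x v - {b})" using finLS[OF v] Lx_sub finite_subset by blast
    ultimately have "card (Lx x u) \<le> card (Lx x v - {b})" using card_inj_on_le by blast
    moreover have "card (Lx x v - {b}) = m - 2" using cLx[OF v] bv finLS[OF v] by simp
    ultimately show False using cLx[OF u] md by simp
  qed
  then obtain a where a: "a \<in> Lx x u" "\<forall>q\<in>Lx x v. \<not> EH a q" by blast
  have LxL: "\<forall>w\<in>V. Lx x w \<subseteq> L (Some w)" using Lx_sub by blast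
  define T1 where "T1 = TR V (Lx x) (EHC (Lx x) True a b)"
  have DP1: "DP_poly V E (m - 1) \<le> card T1" unfolding T1_def
    by (rule subcover[OF LxL]) (use cLx u v uv a bv nb in auto)
  have T1s: "T1 \<subseteq> TR V (Lx x) EH" unfolding T1_def by (rule TR_EHC_sub) (use Lx_sub in blast)+
  define A' where "A' w = (if w = u then {a} else if w = v then {b} else Lx x w)" for w
  have A'Lx: "\<forall>w\<in>V. A' w \<subseteq> Lx x w" using a bv unfolding A'_def by auto
  have A'L: "\<forall>w\<in>V. A' w \<subseteq> L (Some w)" using A'Lx Lx_sub by blast
  define T2 where "T2 = TR V A' EH"
  have T2s: "T2 \<subseteq> TR V (Lx x) EH" unfolding T2_def
  proof (rule TR_mono[OF A'Lx])
    show "\<forall>u\<in>V. \<forall>v\<in>V. u \<noteq> v \<longrightarrow> Lx x u \<inter> Lx x v = {}" using disjSS Lx_sub by blast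
  qed
  have dis: "T1 \<inter> T2 = {}"
  proof (rule ccontr)
    assume "T1 \<inter> T2 \<noteq> {}"
    then obtain J where J: "J \<in> T1" "J \<in> T2" by blast
    have "card (J \<inter> A' u) = 1" "card (J \<inter> A' v) = 1" using J(2) u v unfolding T2_def TR_def by blast+
    moreover have "A' u = {a}" "A' v = {b}" unfolding A'_def using une by auto
    ultimately have "card (J \<inter> {a}) = 1" "card (J \<inter> {b}) = 1" by simp_all
    then have "J \<inter> {a} \<noteq> {}" "J \<inter> {b} \<noteq> {}" by (metis card.empty zero_neq_one)+
    then have ab: "a \<in> J" "b \<in> J" by blast+
    have "EHC (Lx x) True a b a b" unfolding EHC_def using a(1) bv u v by blast
    moreover have "\<forall>p\<in>J. \<forall>q\<in>J. \<not> EHC (Lx x) True a b p q" using J(1) unfolding T1_def TR_def by blast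
    ultimately show False using ab by blast
  qed
  define r' where "r' = (\<lambda>z. if z \<in> {u, v} then (if z = u then (0::nat) else 1) else r z + 2)"
  define cc where "cc = (\<lambda>z. if z \<in> {u, v} then 1 else m - d - 3)"
  have G: "(\<Prod>w\<in>V. cc w) \<le> card T2" unfolding T2_def
  proof (rule greedy_L[OF A'L, of cc r'], rule ballI)
    fix w assume w: "w \<in> V"
    show "cc w + card {w'\<in>V. w' \<noteq> w \<and> r' w' \<le> r' w \<and> (\<exists>p\<in>A' w. \<exists>q\<in>A' w'. EH p q)} \<le> card (A' w)"
    proof (cases "w \<in> {u, v}")
      case True
      have "{w'\<in>V. w' \<noteq> w \<and> r' w' \<le> r' w \<and> (\<exists>p\<in>A' w. \<exists>q\<in>A' w'. EH p q)} = {}"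
      proof (rule ccontr)
        assume "\<not> ?thesis"
        then obtain w' p q where h: "w' \<in> V" "w' \<noteq> w" "r' w' \<le> r' w" "p \<in> A' w" "q \<in> A' w'" "EH p q"
          by blast
        show False
        proof (cases "w = u")
          case True
          then show False using h une unfolding r'_def by (auto split: if_splits)
        next
          case False
          then have wv: "w = v" using \<open>w \<in> {u, v}\<close> by blast
          then have "w' = u" using h une unfolding r'_def by (auto split: if_splits)
          then have "p = b" "q = a" using h wv une unfolding A'_def by auto
          then show False using h(6) nb a(1) by blast
        qed
      qed
      then have "card {w'\<in>V. w' \<noteq> w \<and> r' w' \<le> r' w \<and> (\<exists>p\<in>A' w. \<exists>q\<in>A' w'. EH p q)} = 0"
        by (metis card.empty)
      moreover have "card (A' w) = 1" using True unfolding A'_def by auto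
      ultimately show ?thesis using True unfolding cc_def by simp
    next
      case False
      have "card {w'\<in>V. w' \<noteq> w \<and> r' w' \<le> r' w \<and> (\<exists>p\<in>A' w. \<exists>q\<in>A' w'. EH p q)} \<le> card {u, v} + d"
        unfolding r'_def by (rule nonfront[OF A'L r d]) (use u v w False in auto)
      moreover have "card {u, v} = 2" using une by simp
      moreover have "card (A' w) = m - 1" using cLx w False unfolding A'_def by auto
      ultimately show ?thesis using False md unfolding cc_def by simp
    qed
  qed
  have "(\<Prod>w\<in>V. cc w) = (m - d - 3) ^ card (V - {u, v})"
  proof -
    have "(\<Prod>w\<in>V. cc w) = (\<Prod>w\<in>V \<inter> {w. w \<in> {u, v}}. 1) * (\<Prod>w\<in>V \<inter> - {w. w \<in> {u, v}}. m - d - 3)"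
      unfolding cc_def by (rule prod.If_cases[OF finV])
    moreover have "V \<inter> - {w. w \<in> {u, v}} = V - {u, v}" by blast
    ultimately show ?thesis by simp
  qed
  also have "card (V - {u, v}) = card V - 2" using u v une finV by (simp add: card_Diff_subset)
  finally have G2: "(m - d - 3) ^ (card V - 2) \<le> card T2" using G by simp
  have fT: "finite (TR V (Lx x) EH)" using finTR LxL by blast
  have "card (T1 \<union> T2) = card T1 + card T2"
    by (rule card_Un_disjoint) (use T1s T2s fT dis finite_subset in blast)+
  moreover have "card (T1 \<union> T2) \<le> card (TR V (Lx x) EH)"
    by (rule card_mono) (use T1s T2s fT in blast)+
  ultimately show ?thesis using DP1 G2 by linarith
qed

end


context jcov begin

lemma caseA1:
  assumes fu: "full"
  and A1: "\<forall>u\<in>V. \<forall>v\<in>V. E u v \<longrightarrow> (\<forall>x\<in>W. \<forall>y\<in>W. EH (sig u x) (sig v y) \<longrightarrow> x = y)"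
  shows "chrom_poly (join_V V) (join_E V E) m \<le> card (TR (join_V V) L EH)"
proof -
  let ?J = "join_V V" and ?JE = "join_E V E"
  obtain e where e: "bij_betw e {0..<card W} W" using ex_bij_betw_nat_finite finL Jv_simps(1) by blast
  then have e: "bij_betw e {..<m} W" using cardW by (simp add: atLeast0LessThan)
  have eW: "i < m \<Longrightarrow> e i \<in> W" for i using e bij_betwE by fastforce
  have einj: "i < m \<Longrightarrow> j < m \<Longrightarrow> e i = e j \<Longrightarrow> i = j" for i j
    using e unfolding bij_betw_def inj_on_def by blast
  define s where "s w y = (case w of None \<Rightarrow> y | Some v \<Rightarrow> sig v y)" for w y
  have sL: "s w y \<in> L w" if "w \<in> ?J" "y \<in> W" for w y
  proof (cases w)
    case None then show ?thesis using that unfolding s_def by simp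
  next
    case (Some v) then show ?thesis using that sig[OF fu, of y v] Jv_simps unfolding s_def by simp
  qed
  have s_inj: "y = y'" if "w \<in> ?J" "y \<in> W" "y' \<in> W" "s w y = s w y'" for w y y'
  proof (cases w)
    case None then show ?thesis using that unfolding s_def by simp
  next
    case (Some v) then show ?thesis using that sig_inj[OF fu, of v y y'] Jv_simps unfolding s_def by simp
  qed
  have key: "y1 = y2" if h: "w1 \<in> ?J" "w2 \<in> ?J" "?JE w1 w2" "y1 \<in> W" "y2 \<in> W" "EH (s w1 y1) (s w2 y2)"
    for w1 w2 y1 y2
  proof (cases w1)
    case None
    then obtain v where v: "w2 = Some v" using h(3) by (cases w2) auto
    then have vV: "v \<in> V" using h(2) Jv_simps by simp
    have "EH y1 (sig v y2)" using h(6) None v unfolding s_def by simp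
    then have "sig v y2 = sig v y1" using sig_uniq[OF fu h(4) vV] sig[OF fu h(5) vV] by blast
    then show ?thesis using sig_inj[OF fu vV h(5,4)] by simp
  next
    case (Some u)
    then have uV: "u \<in> V" using h(1) Jv_simps by simp
    show ?thesis
    proof (cases w2)
      case None
      have "EH (sig u y1) y2" using h(6) None Some unfolding s_def by simp
      then have "EH y2 (sig u y1)" by (rule EHsym)
      then have "sig u y1 = sig u y2" using sig_uniq[OF fu h(5) uV] sig[OF fu h(4) uV] by blast
      then show ?thesis using sig_inj[OF fu uV h(4,5)] by simp
    next
      case (Some v)
      then have vV: "v \<in> V" using h(2) Jv_simps by simp
      have "E u v" using h(3) Some \<open>w1 = Some u\<close> by simp
      moreover have "EH (sig u y1) (sig v y2)" using h(6) Some \<open>w1 = Some u\<close> unfolding s_def by simp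
      ultimately show ?thesis using A1 uV vV h(4,5) by blast
    qed
  qed
  define Phi where "Phi f = (\<lambda>w. s w (e (f w))) ` ?J" for f :: "'a option \<Rightarrow> nat"
  define P where "P = {f \<in> ?J \<rightarrow>\<^sub>E {..<m}. \<forall>u\<in>?J. \<forall>v\<in>?J. ?JE u v \<longrightarrow> f u \<noteq> f v}"
  have fP: "f w < m" if "f \<in> P" "w \<in> ?J" for f w using that unfolding P_def by auto
  have PhiL: "Phi f \<inter> L w = {s w (e (f w))}" if f: "f \<in> P" and w: "w \<in> ?J" for f w
  proof
    show "{s w (e (f w))} \<subseteq> Phi f \<inter> L w" using sL[OF w eW[OF fP[OF f w]]] w unfolding Phi_def by blast
    show "Phi f \<inter> L w \<subseteq> {s w (e (f w))}"
    proof
      fix p assume p: "p \<in> Phi f \<inter> L w"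
      then obtain w' where w': "w' \<in> ?J" "p = s w' (e (f w'))" unfolding Phi_def by blast
      then have "p \<in> L w'" using sL eW fP f by blast
      then have "w' = w" using p w w' gc_disj[OF gc] by blast
      then show "p \<in> {s w (e (f w))}" using w' by simp
    qed
  qed
  have PhiT: "Phi f \<in> TR ?J L EH" if f: "f \<in> P" for f
  proof -
    have "Phi f \<subseteq> (\<Union>w\<in>?J. L w)" unfolding Phi_def using sL eW fP f by blast
    moreover have "\<forall>p\<in>Phi f. \<forall>q\<in>Phi f. \<not> EH p q"
    proof (intro ballI notI)
      fix p q assume pq: "p \<in> Phi f" "q \<in> Phi f" "EH p q"
      then obtain w1 w2 where w: "w1 \<in> ?J" "w2 \<in> ?J" "p = s w1 (e (f w1))" "q = s w2 (e (f w2))"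
        unfolding Phi_def by blast
      show False
      proof (cases "w1 = w2")
        case True then show False using pq w EHirr by simp
      next
        case False
        have pL: "p \<in> L w1" "q \<in> L w2" using w sL eW fP f by blast+
        have "?JE w1 w2" using gc_cross[OF gc, rule_format, OF w(1,2) pL pq(3)] False by simp
        moreover have "e (f w1) = e (f w2)"
          using key[OF w(1,2) calculation eW[OF fP[OF f w(1)]] eW[OF fP[OF f w(2)]]] pq(3) w by simp
        then have "f w1 = f w2" using einj fP f w by blast
        ultimately show False using f w(1,2) unfolding P_def by blast
      qed
    qed
    moreover have "\<forall>w\<in>?J. card (Phi f \<inter> L w) = 1" using PhiL f by simp
    ultimately show ?thesis unfolding TR_def by simp
  qed
  have inj: "inj_on Phi P"
  proof (rule inj_onI)
    fix f g assume fg: "f \<in> P" "g \<in> P" "Phi f = Phi g"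
    show "f = g"
    proof (rule PiE_ext)
      show "f \<in> ?J \<rightarrow>\<^sub>E {..<m}" "g \<in> ?J \<rightarrow>\<^sub>E {..<m}" using fg unfolding P_def by auto
      fix w assume w: "w \<in> ?J"
      have "{s w (e (f w))} = {s w (e (g w))}" using PhiL[OF fg(1) w] PhiL[OF fg(2) w] fg(3) by simp
      then have "e (f w) = e (g w)" using s_inj[OF w eW[OF fP[OF fg(1) w]] eW[OF fP[OF fg(2) w]]] by simp
      then show "f w = g w" using einj fP fg w by blast
    qed
  qed
  have "chrom_poly ?J ?JE m = card P" unfolding chrom_poly_def P_def by simp
  also have "\<dots> = card (Phi ` P)" using inj by (simp add: card_image)
  also have "\<dots> \<le> card (TR ?J L EH)" by (rule card_mono[OF finTRJ]) (use PhiT in blast)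
  finally show ?thesis .
qed

end


lemma pow_ineq:
  fixes t n :: nat
  assumes "1 \<le> t" "2 \<le> n"
  shows "2 * t ^ (n - 2) \<le> (t + 1) ^ (n - 1)"
proof -
  have "n - 1 = Suc (n - 2)" using assms(2) by simp
  then have "(t + 1) ^ (n - 1) = (t + 1) * (t + 1) ^ (n - 2)" by simp
  moreover have "t ^ (n - 2) \<le> (t + 1) ^ (n - 2)" by (rule power_mono) simp_all
  moreover have "2 \<le> t + 1" using assms(1) by simp
  ultimately show ?thesis by (metis mult_le_mono)
qed

lemma sum_ge_const:
  fixes g :: "'b \<Rightarrow> nat"
  assumes "\<forall>x\<in>S. c \<le> g x"
  shows "card S * c \<le> sum g S"
proof -
  have "sum (\<lambda>_. c) S \<le> sum g S" using assms by (intro sum_mono) blast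
  then show ?thesis by simp
qed

context jcov begin

lemma cover_bound:
  fixes r :: "'a \<Rightarrow> nat"
  assumes r: "inj_on r V" and d: "\<forall>v\<in>V. card {w\<in>V. E v w \<and> r w < r v} \<le> d"
  and md: "d + 4 \<le> m" and n2: "2 \<le> card V"
  shows "min (chrom_poly (join_V V) (join_E V E) m)
            (m * DP_poly V E (m - 1) + 2 * (m - d - 3) ^ (card V - 2))
         \<le> num_cover_colorings (join_V V) VH EH"
proof -
  define g where "g x = card (TR V (Lx x) EH)" for x
  define D where "D = DP_poly V E (m - 1)"
  define t where "t = m - d - 3"
  have finW: "finite W" using finL Jv_simps(1) by blast
  have gD: "\<forall>x\<in>W. D \<le> g x" unfolding g_def D_def using DP_x by blast
  have ncc: "(\<Sum>x\<in>W. g x) \<le> num_cover_colorings (join_V V) VH EH"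
  proof -
    have "(\<Sum>x\<in>W. g x) \<le> (\<Sum>x\<in>W. card {I \<in> TR (join_V V) L EH. x \<in> I})"
      unfolding g_def by (rule sum_mono) (rule col_x)
    also have "\<dots> = card (TR (join_V V) L EH)" using count_split by simp
    also have "\<dots> = num_cover_colorings (join_V V) VH EH" using ncc_eq by simp
    finally show ?thesis .
  qed
  have goal: "m * D + 2 * t ^ (card V - 2) \<le> (\<Sum>x\<in>W. g x) \<or>
              chrom_poly (join_V V) (join_E V E) m \<le> num_cover_colorings (join_V V) VH EH"
  proof (cases full)
    case False
    then obtain x0 v0 where x0: "x0 \<in> W" "v0 \<in> V" "\<forall>z\<in>L (Some v0). \<not> EH x0 z"
      unfolding full_def by blast
    have "D + (m - d - 2) ^ (card V - 1) \<le> g x0"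
      unfolding g_def D_def by (rule caseB[OF x0 r d md])
    moreover have "2 * t ^ (card V - 2) \<le> (m - d - 2) ^ (card V - 1)"
    proof -
      have "m - d - 2 = t + 1" "1 \<le> t" unfolding t_def using md by simp_all
      then show ?thesis using pow_ineq[of t "card V"] n2 by simp
    qed
    moreover have "(\<Sum>x\<in>W. g x) = g x0 + (\<Sum>x\<in>W - {x0}. g x)" using finW x0(1) by (simp add: sum.remove)
    moreover have "(m - 1) * D \<le> (\<Sum>x\<in>W - {x0}. g x)"
    proof -
      have "card (W - {x0}) = m - 1" using cardW x0(1) finW by simp
      moreover have "card (W - {x0}) * D \<le> (\<Sum>x\<in>W - {x0}. g x)" using gD by (intro sum_ge_const) blast
      ultimately show ?thesis by simp
    qed
    moreover have "m * D = D + (m - 1) * D"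
    proof -
      have "m = Suc (m - 1)" using md by simp
      then have "m * D = Suc (m - 1) * D" by simp
      then show ?thesis by simp
    qed
    ultimately have "m * D + 2 * t ^ (card V - 2) \<le> (\<Sum>x\<in>W. g x)" by linarith
    then show ?thesis by simp
  next
    case fu: True
    show ?thesis
    proof (cases "\<forall>u\<in>V. \<forall>v\<in>V. E u v \<longrightarrow> (\<forall>x\<in>W. \<forall>y\<in>W. EH (sig u x) (sig v y) \<longrightarrow> x = y)")
      case True
      then show ?thesis using caseA1[OF fu] ncc_eq by simp
    next
      case False
      then obtain u v x y where h: "u \<in> V" "v \<in> V" "E u v" "x \<in> W" "y \<in> W"
        "EH (sig u x) (sig v y)" "x \<noteq> y" by blast
      have gx: "D + t ^ (card V - 2) \<le> g x"
        unfolding g_def D_def t_def by (rule caseA2[OF fu h(1-5,7,6) r d md])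
      have gy: "D + t ^ (card V - 2) \<le> g y"
        unfolding g_def D_def t_def
        by (rule caseA2[OF fu h(2,1) Esym[OF h(3)] h(5,4) h(7)[symmetric] EHsym[OF h(6)] r d md])
      have "(\<Sum>x\<in>W. g x) = g x + (\<Sum>x\<in>W - {x}. g x)" using finW h(4) by (simp add: sum.remove)
      moreover have "(\<Sum>x\<in>W - {x}. g x) = g y + (\<Sum>x\<in>W - {x} - {y}. g x)"
        using finW h(4,5,7) by (simp add: sum.remove)
      moreover have "(m - 2) * D \<le> (\<Sum>x\<in>W - {x} - {y}. g x)"
      proof -
        have "card (W - {x} - {y}) = m - 2" using cardW h(4,5,7) finW by simp
        moreover have "card (W - {x} - {y}) * D \<le> (\<Sum>x\<in>W - {x} - {y}. g x)" using gD by (intro sum_ge_const) blast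
        ultimately show ?thesis by simp
      qed
      moreover have "m * D = D + D + (m - 2) * D"
      proof -
        have "m = Suc (Suc (m - 2))" using md by simp
        then have "m * D = Suc (Suc (m - 2)) * D" by simp
        then show ?thesis by simp
      qed
      ultimately have "m * D + 2 * t ^ (card V - 2) \<le> (\<Sum>x\<in>W. g x)" using gx gy by linarith
      then show ?thesis by simp
    qed
  qed
  then show ?thesis
  proof
    assume "m * D + 2 * t ^ (card V - 2) \<le> (\<Sum>x\<in>W. g x)"
    then show ?thesis using ncc unfolding D_def t_def by linarith
  next
    assume "chrom_poly (join_V V) (join_E V E) m \<le> num_cover_colorings (join_V V) VH EH"
    then show ?thesis by linarith
  qed
qed

end


lemma col_facts:
  fixes V :: "'a set"
  assumes fV: "finite V"
  obtains r :: "'a \<Rightarrow> nat" where "inj_on r V"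
    "\<forall>v\<in>V. card {w\<in>V. E v w \<and> r w < r v} \<le> col V E - 1" "col V E \<le> card V"
proof -
  define P where "P d = (\<exists>xs. distinct xs \<and> set xs = V \<and>
      (\<forall>i < length xs. card {j. j < i \<and> E (xs ! i) (xs ! j)} < d))" for d
  obtain xs0 where xs0: "set xs0 = V" "distinct xs0" using finite_distinct_list[OF fV] by blast
  have "P (card V)" unfolding P_def
  proof (intro exI conjI allI impI)
    show "distinct xs0" "set xs0 = V" using xs0 by simp_all
    fix i assume i: "i < length xs0"
    have "card {j. j < i \<and> E (xs0 ! i) (xs0 ! j)} \<le> card {..<i}" by (rule card_mono) auto
    also have "\<dots> < card V" using i xs0 distinct_card by fastforce
    finally show "card {j. j < i \<and> E (xs0 ! i) (xs0 ! j)} < card V" .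
  qed
  then have Pc: "P (col V E)" and cle: "col V E \<le> card V"
    unfolding col_def P_def by (rule LeastI, rule Least_le)
  from Pc obtain xs where xs: "distinct xs" "set xs = V"
    "\<forall>i < length xs. card {j. j < i \<and> E (xs ! i) (xs ! j)} < col V E" unfolding P_def by blast
  define I where "I = {..<length xs}"
  have inj: "inj_on (nth xs) I" unfolding I_def using xs(1) by (simp add: inj_on_nth)
  have img: "nth xs ` I = V" unfolding I_def using xs(2) by (auto simp: in_set_conv_nth)
  define r where "r = the_inv_into I (nth xs)"
  have rI: "r v \<in> I" if "v \<in> V" for v unfolding r_def using the_inv_into_into[OF inj _ subset_refl] img that by blast
  have xr: "xs ! (r v) = v" if "v \<in> V" for v unfolding r_def using f_the_inv_into_f[OF inj] img that by blast
  have rx: "r (xs ! j) = j" if "j \<in> I" for j unfolding r_def using the_inv_into_f_f[OF inj that] .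
  have rinj: "inj_on r V" by (rule inj_onI) (metis xr)
  have bk: "\<forall>v\<in>V. card {w\<in>V. E v w \<and> r w < r v} \<le> col V E - 1"
  proof
    fix v assume v: "v \<in> V"
    have sub: "{w\<in>V. E v w \<and> r w < r v} \<subseteq> nth xs ` {j. j < r v \<and> E (xs ! r v) (xs ! j)}"
    proof
      fix w assume w: "w \<in> {w\<in>V. E v w \<and> r w < r v}"
      then have "w = xs ! (r w)" "r w < r v" "E (xs ! r v) (xs ! r w)" using xr v by auto
      then show "w \<in> nth xs ` {j. j < r v \<and> E (xs ! r v) (xs ! j)}" by blast
    qed
    have "card {w\<in>V. E v w \<and> r w < r v} \<le> card (nth xs ` {j. j < r v \<and> E (xs ! r v) (xs ! j)})"
      by (rule card_mono[OF _ sub]) simp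
    also have "\<dots> \<le> card {j. j < r v \<and> E (xs ! r v) (xs ! j)}" by (rule card_image_le) simp
    also have "\<dots> < col V E" using xs(3) rI[OF v] unfolding I_def by simp
    finally show "card {w\<in>V. E v w \<and> r w < r v} \<le> col V E - 1" by simp
  qed
  show ?thesis using that rinj bk cle by blast
qed

lemma std_cover:
  assumes sg: "simple_graph V E"
  shows "is_m_fold_cover (join_V V) (join_E V E) m (\<lambda>w. {w} \<times> {..<m}) (join_V V \<times> {..<m})
     (\<lambda>p q. p \<in> join_V V \<times> {..<m} \<and> q \<in> join_V V \<times> {..<m} \<and> fst p = fst q \<and> p \<noteq> q)"
proof -
  have nl: "\<not> join_E V E w w" for w using sg_irr[OF sg] by (cases w) auto
  have fin: "finite (join_V V)" unfolding join_V_def using sg_fin[OF sg] by simp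
  show ?thesis
    unfolding is_m_fold_cover_def is_cover_def simple_graph_def
    using fin nl by (auto simp: card_cartesian_product)
qed

theorem mainTheorem6:
  fixes V :: "'a set" and E :: "'a \<Rightarrow> 'a \<Rightarrow> bool" and m :: nat
  assumes "simple_graph V E"
    and "connected_graph V E"
    and "col V E \<ge> 3"
    and "m \<ge> col V E + 3"
  shows "DP_poly (join_V V) (join_E V E) m \<ge>
           min (chrom_poly (join_V V) (join_E V E) m)
               (m * DP_poly V E (m - 1) + 2 * (m - col V E - 2) ^ (card V - 2))"
proof -
  obtain r :: "'a \<Rightarrow> nat" where r: "inj_on r V"
    "\<forall>v\<in>V. card {w\<in>V. E v w \<and> r w < r v} \<le> col V E - 1" "col V E \<le> card V"
    using col_facts[OF sg_fin[OF assms(1)]] by metis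
  define d where "d = col V E - 1"
  have md: "d + 4 \<le> m" unfolding d_def using assms(3,4) by simp
  have n2: "2 \<le> card V" using r(3) assms(3) by simp
  have tt: "m - col V E - 2 = m - d - 3" unfolding d_def using assms(3) by simp
  define bound where "bound = min (chrom_poly (join_V V) (join_E V E) m)
               (m * DP_poly V E (m - 1) + 2 * (m - col V E - 2) ^ (card V - 2))"
  have all: "bound \<le> num_cover_colorings (join_V V) VH EH"
    if c: "is_m_fold_cover (join_V V) (join_E V E) m L VH EH" for L VH EH
  proof -
    have "jcov V E m L VH EH"
      unfolding jcov_def using assms(1) c unfolding is_m_fold_cover_def is_cover_gcover by blast
    from jcov.cover_bound[OF this r(1) r(2)[folded d_def] md n2] show ?thesis
      unfolding bound_def tt .
  qed
  have ne: "{num_cover_colorings (join_V V) VH EH | L VH EH. is_m_fold_cover (join_V V) (join_E V E) m L VH EH} \<noteq> {}"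
    using std_cover[OF assms(1)] by blast
  have "bound \<le> DP_poly (join_V V) (join_E V E) m"
    unfolding DP_poly_def by (rule cInf_greatest[OF ne]) (use all in blast)
  then show ?thesis unfolding bound_def .
qed


end
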